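(* Let $\eta\in\Upsilon_{z_0}$ and let $(u_M,M)$ and $(v_M,M)$ denote the states of $\widetilde{\mathbf M}_\eta$ and $\widehat{\mathbf M}_\eta$, respectively, at time $M$. Then, for each $M$, $v_M$ has the same distribution as the unique element of $\widehat W$ lying in the coset $u_MW=\{u_Mw:w\in W\}$.
   Context: Let $\Phi$ be a finite irreducible crystallographic root system with simple roots $\{\alpha_i:i\in I\}$, highest root $\theta$, Weyl group $W$ and affine Weyl group $\widetilde W$ with simple reflections $s_i$, $i\in\widetilde I=\{0\}\sqcup I$; $Q^\vee\subseteq V^*$ is the coroot lattice. $\mathcal H_{\widetilde W}=\{\mathrm H_\beta^k=\{\gamma\in V^*:\gamma(\beta)=k\}:\beta\in\Phi^+,k\in\mathbb Z\}$. $\widetilde W$ acts faithfully on $V^*$ on the right, $s_i$ ($i\in I$) reflecting through $\mathrm H^0_{\alpha_i}$ and $s_0$ through $\mathrm H^1_\theta$; $W=\langle s_i:i\in I\rangle$. $\mathcal C=\{\gamma:\gamma(\alpha_i)\ge0\ \forall i\in I\}$, $\mathcal A=\{\gamma\in\mathcal C:\gamma(\theta)\le1\}$, $u\mapsto\mathcal A u$ bijects $\widetilde W$ onto alcoves; $\mathrm H^{(u,s_i)}$ separates $\mathcal A u$ and $\mathcal A s_iu$. $\widehat W=\{w\in\widetilde W:\mathcal A w\subseteq\mathcal C\}$ (each coset $uW$ contains exactly one element of $\widehat W$). Fix $z_0$ in the interior of $\mathcal A$ and $p\in(0,1)$. $\Upsilon_{z_0}$: the set of $\eta\in Q^\vee\setminus\{0\}$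 whose ray from $z_0$ avoids intersections of two or more hyperplanes of $\mathcal H_{\widetilde W}$. For such $\eta$, if the ray passes successively through $\mathcal A u_0=\mathcal A,\mathcal A u_1,\dots$, define $i_j$ by $u_{j+1}=s_{i_j}u_j$; the sequence is periodic with period $N_\eta$. $\widetilde{\mathbf M}_\eta$ is the Markov chain on $\widetilde W\times\mathbb Z/N_\eta\mathbb Z$ started at $(\mathbbm 1,0)$: from $(u,k)$, if $\mathrm H^{(u,s_{i_k})}$ does not separate $\mathcal A u$ from $\mathcal A$, go to $(s_{i_k}u,k+1)$ with probability $p$, else to $(u,k+1)$ with probability $1-p$; if it does separate them, go to $(u,k+1)$. $\widehat{\mathbf M}_\eta$ on $\widehat W\times\mathbb Z/N_\eta\mathbb Z$ is identical except that the move to $(s_{i_k}u,k+1)$ is only allowed (with probability $p$) when also $\mathcal A s_{i_k}u\subseteq\mathcal C$. *)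

theory Defs
  imports "HOL-Analysis.Analysis" "HOL-Probability.Probability"
begin

text \<open>V is a Euclidean space 'a; the dual V* is identified with V via
the inner product, so gamma(beta) is written gamma \<bullet> beta. Affine reflection indices
are 'a option: None is the index 0, Some alpha (alpha a simple root) is the index of s_alpha.
An element u of the affine Weyl group is represented (faithfully) by the map
gamma |-> gamma u (right action); hence s_j u is represented by u o s_j and the product
u v by v o u.\<close>

definition coroot :: "'a::euclidean_space \<Rightarrow> 'a" where
  "coroot \<beta> = (2 / (\<beta> \<bullet> \<beta>)) *\<^sub>R \<beta>"

definition root_system :: "'a::euclidean_space set \<Rightarrow> bool" where
  "root_system \<Phi> \<longleftrightarrow> finite \<Phi> \<and> 0 \<notin> \<Phi> \<and> span \<Phi> = UNIV
     \<and> (\<forall>\<alpha>\<in>\<Phi>. \<forall>\<beta>\<in>\<Phi>. \<beta> - (\<beta> \<bullet> \<alpha>) *\<^sub>R coroot \<alpha> \<in> \<Phi>)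
     \<and> (\<forall>\<alpha>\<in>\<Phi>. \<forall>\<beta>\<in>\<Phi>. \<beta> \<bullet> coroot \<alpha> \<in> \<int>)
     \<and> (\<forall>\<alpha>\<in>\<Phi>. \<forall>c::real. c *\<^sub>R \<alpha> \<in> \<Phi> \<longrightarrow> c = 1 \<or> c = -1)"

definition irreducible_rs :: "'a::euclidean_space set \<Rightarrow> bool" where
  "irreducible_rs \<Phi> \<longleftrightarrow> \<not> (\<exists>\<Phi>1 \<Phi>2. \<Phi>1 \<noteq> {} \<and> \<Phi>2 \<noteq> {} \<and> \<Phi>1 \<union> \<Phi>2 = \<Phi> \<and> \<Phi>1 \<inter> \<Phi>2 = {}
        \<and> (\<forall>a\<in>\<Phi>1. \<forall>b\<in>\<Phi>2. a \<bullet> b = 0))"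

definition nonneg_comb :: "'a::euclidean_space set \<Rightarrow> 'a \<Rightarrow> bool" where
  "nonneg_comb \<Delta> \<beta> \<longleftrightarrow> (\<exists>c::'a \<Rightarrow> nat. \<beta> = (\<Sum>\<alpha>\<in>\<Delta>. real (c \<alpha>) *\<^sub>R \<alpha>))"

definition simple_system :: "'a::euclidean_space set \<Rightarrow> 'a set \<Rightarrow> bool" where
  "simple_system \<Phi> \<Delta> \<longleftrightarrow> \<Delta> \<subseteq> \<Phi> \<and> independent \<Delta> \<and> span \<Delta> = UNIV
     \<and> (\<forall>\<beta>\<in>\<Phi>. nonneg_comb \<Delta> \<beta> \<or> nonneg_comb \<Delta> (- \<beta>))"

definition pos_roots :: "'a::euclidean_space set \<Rightarrow> 'a set \<Rightarrow> 'a set" where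
  "pos_roots \<Phi> \<Delta> = {\<beta>\<in>\<Phi>. nonneg_comb \<Delta> \<beta>}"

definition highest_root :: "'a::euclidean_space set \<Rightarrow> 'a set \<Rightarrow> 'a \<Rightarrow> bool" where
  "highest_root \<Phi> \<Delta> \<theta> \<longleftrightarrow> \<theta> \<in> \<Phi> \<and> (\<forall>\<beta>\<in>\<Phi>. nonneg_comb \<Delta> (\<theta> - \<beta>))"

definition coroot_lattice :: "'a::euclidean_space set \<Rightarrow> 'a set" where
  "coroot_lattice \<Phi> = {x. \<exists>c::'a \<Rightarrow> int. x = (\<Sum>\<beta>\<in>\<Phi>. of_int (c \<beta>) *\<^sub>R coroot \<beta>)}"

definition aff_idx :: "'a set \<Rightarrow> 'a option set" where
  "aff_idx \<Delta> = insert None (Some ` \<Delta>)"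

text \<open>The simple reflection s_j as a map on V*: s_alpha reflects through H^0_alpha,
s_0 through H^1_theta.\<close>
definition sref :: "'a::euclidean_space \<Rightarrow> 'a option \<Rightarrow> 'a \<Rightarrow> 'a" where
  "sref \<theta> j x = (case j of Some \<alpha> \<Rightarrow> x - (x \<bullet> \<alpha>) *\<^sub>R coroot \<alpha>
                          | None \<Rightarrow> x - (x \<bullet> \<theta> - 1) *\<^sub>R coroot \<theta>)"

definition wall :: "'a::euclidean_space \<Rightarrow> 'a option \<Rightarrow> 'a set" where
  "wall \<theta> j = (case j of Some \<alpha> \<Rightarrow> {x. x \<bullet> \<alpha> = 0} | None \<Rightarrow> {x. x \<bullet> \<theta> = 1})"

definition smul :: "'a::euclidean_space \<Rightarrow> 'a option \<Rightarrow> ('a \<Rightarrow> 'a) \<Rightarrow> ('a \<Rightarrow> 'a)" where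
  "smul \<theta> j u = u \<circ> sref \<theta> j"

definition gmul :: "('a \<Rightarrow> 'a) \<Rightarrow> ('a \<Rightarrow> 'a) \<Rightarrow> ('a \<Rightarrow> 'a)" where
  "gmul u v = v \<circ> u"

text \<open>Affine Weyl group and finite Weyl group, as groups of maps generated by the simple
reflections (these are involutions, so the generated monoid is the generated group).\<close>
inductive_set affW :: "'a::euclidean_space set \<Rightarrow> 'a \<Rightarrow> ('a \<Rightarrow> 'a) set" for \<Delta> \<theta> where
  affW_id: "id \<in> affW \<Delta> \<theta>"
| affW_step: "u \<in> affW \<Delta> \<theta> \<Longrightarrow> j \<in> aff_idx \<Delta> \<Longrightarrow> smul \<theta> j u \<in> affW \<Delta> \<theta>"

inductive_set finW :: "'a::euclidean_space set \<Rightarrow> 'a \<Rightarrow> ('a \<Rightarrow> 'a) set" for \<Delta> \<theta> where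
  finW_id: "id \<in> finW \<Delta> \<theta>"
| finW_step: "u \<in> finW \<Delta> \<theta> \<Longrightarrow> \<alpha> \<in> \<Delta> \<Longrightarrow> smul \<theta> (Some \<alpha>) u \<in> finW \<Delta> \<theta>"

definition domC :: "'a::euclidean_space set \<Rightarrow> 'a set" where
  "domC \<Delta> = {\<gamma>. \<forall>\<alpha>\<in>\<Delta>. 0 \<le> \<gamma> \<bullet> \<alpha>}"

definition fundA :: "'a::euclidean_space set \<Rightarrow> 'a \<Rightarrow> 'a set" where
  "fundA \<Delta> \<theta> = {\<gamma> \<in> domC \<Delta>. \<gamma> \<bullet> \<theta> \<le> 1}"

definition alcove :: "'a::euclidean_space set \<Rightarrow> 'a \<Rightarrow> ('a \<Rightarrow> 'a) \<Rightarrow> 'a set" where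
  "alcove \<Delta> \<theta> u = u ` fundA \<Delta> \<theta>"

text \<open>The hyperplane H^(u,s_j) separating A u and A s_j u.\<close>
definition hyp :: "'a::euclidean_space \<Rightarrow> ('a \<Rightarrow> 'a) \<Rightarrow> 'a option \<Rightarrow> 'a set" where
  "hyp \<theta> u j = u ` wall \<theta> j"

definition What :: "'a::euclidean_space set \<Rightarrow> 'a \<Rightarrow> ('a \<Rightarrow> 'a) set" where
  "What \<Delta> \<theta> = {w \<in> affW \<Delta> \<theta>. alcove \<Delta> \<theta> w \<subseteq> domC \<Delta>}"

definition coset :: "'a::euclidean_space set \<Rightarrow> 'a \<Rightarrow> ('a \<Rightarrow> 'a) \<Rightarrow> ('a \<Rightarrow> 'a) set" where
  "coset \<Delta> \<theta> u = {gmul u w | w. w \<in> finW \<Delta> \<theta>}"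

definition coset_rep :: "'a::euclidean_space set \<Rightarrow> 'a \<Rightarrow> ('a \<Rightarrow> 'a) \<Rightarrow> ('a \<Rightarrow> 'a)" where
  "coset_rep \<Delta> \<theta> u = (THE v. v \<in> What \<Delta> \<theta> \<and> v \<in> coset \<Delta> \<theta> u)"

definition separates :: "'a::euclidean_space set \<Rightarrow> 'a set \<Rightarrow> 'a set \<Rightarrow> bool" where
  "separates H X Y \<longleftrightarrow> (\<exists>\<beta> k. \<beta> \<noteq> 0 \<and> H = {x. x \<bullet> \<beta> = k} \<and>
      (((\<forall>x\<in>interior X. x \<bullet> \<beta> < k) \<and> (\<forall>y\<in>interior Y. k < y \<bullet> \<beta>)) \<or>
       ((\<forall>x\<in>interior X. k < x \<bullet> \<beta>) \<and> (\<forall>y\<in>interior Y. y \<bullet> \<beta> < k))))"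

definition hyperplanes :: "'a::euclidean_space set \<Rightarrow> 'a set \<Rightarrow> 'a set set" where
  "hyperplanes \<Phi> \<Delta> = {{x. x \<bullet> \<beta> = of_int k} | \<beta> k. \<beta> \<in> pos_roots \<Phi> \<Delta>}"

definition Upsilon :: "'a::euclidean_space set \<Rightarrow> 'a set \<Rightarrow> 'a \<Rightarrow> 'a set" where
  "Upsilon \<Phi> \<Delta> z0 = {\<eta> \<in> coroot_lattice \<Phi> - {0}. \<forall>t::real. t \<ge> 0 \<longrightarrow>
      \<not> (\<exists>H1\<in>hyperplanes \<Phi> \<Delta>. \<exists>H2\<in>hyperplanes \<Phi> \<Delta>. H1 \<noteq> H2 \<and> z0 + t *\<^sub>R \<eta> \<in> H1 \<and> z0 + t *\<^sub>R \<eta> \<in> H2)}"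

definition ray_seq :: "'a::euclidean_space set \<Rightarrow> 'a \<Rightarrow> 'a \<Rightarrow> 'a \<Rightarrow> (nat \<Rightarrow> 'a option) \<Rightarrow> bool" where
  "ray_seq \<Delta> \<theta> z0 \<eta> i \<longleftrightarrow> (\<forall>j. i j \<in> aff_idx \<Delta>) \<and>
     (\<exists>(u :: nat \<Rightarrow> 'a \<Rightarrow> 'a) (\<tau> :: nat \<Rightarrow> real).
        u 0 = id \<and> \<tau> 0 = 0 \<and> strict_mono \<tau> \<and> filterlim \<tau> at_top sequentially \<and>
        (\<forall>j. u (Suc j) = smul \<theta> (i j) (u j)) \<and>
        (\<forall>j. \<forall>t\<in>{\<tau> j..\<tau> (Suc j)}. z0 + t *\<^sub>R \<eta> \<in> alcove \<Delta> \<theta> (u j)))"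

text \<open>One step of the chain M-tilde (states (u,k), k in {0..<N} representing Z/NZ).\<close>
definition step_tilde :: "'a::euclidean_space set \<Rightarrow> 'a \<Rightarrow> nat \<Rightarrow> (nat \<Rightarrow> 'a option) \<Rightarrow> real
    \<Rightarrow> ('a \<Rightarrow> 'a) \<times> nat \<Rightarrow> (('a \<Rightarrow> 'a) \<times> nat) pmf" where
  "step_tilde \<Delta> \<theta> N i p s = (case s of (u, k) \<Rightarrow>
     (if \<not> separates (hyp \<theta> u (i k)) (alcove \<Delta> \<theta> u) (fundA \<Delta> \<theta>)
      then map_pmf (\<lambda>b. if b then (smul \<theta> (i k) u, Suc k mod N) else (u, Suc k mod N)) (bernoulli_pmf p)
      else return_pmf (u, Suc k mod N)))"

definition step_hat :: "'a::euclidean_space set \<Rightarrow> 'a \<Rightarrow> nat \<Rightarrow> (nat \<Rightarrow> 'a option) \<Rightarrow> real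
    \<Rightarrow> ('a \<Rightarrow> 'a) \<times> nat \<Rightarrow> (('a \<Rightarrow> 'a) \<times> nat) pmf" where
  "step_hat \<Delta> \<theta> N i p s = (case s of (u, k) \<Rightarrow>
     (if \<not> separates (hyp \<theta> u (i k)) (alcove \<Delta> \<theta> u) (fundA \<Delta> \<theta>)
         \<and> alcove \<Delta> \<theta> (smul \<theta> (i k) u) \<subseteq> domC \<Delta>
      then map_pmf (\<lambda>b. if b then (smul \<theta> (i k) u, Suc k mod N) else (u, Suc k mod N)) (bernoulli_pmf p)
      else return_pmf (u, Suc k mod N)))"

definition chain_dist :: "(('b \<Rightarrow> 'b) \<times> nat \<Rightarrow> (('b \<Rightarrow> 'b) \<times> nat) pmf) \<Rightarrow> nat \<Rightarrow> (('b \<Rightarrow> 'b) \<times> nat) pmf" where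
  "chain_dist step M = ((\<lambda>d. bind_pmf d step) ^^ M) (return_pmf (id, 0))"

end

theory Submission
  imports Defs
begin

definition refl :: "'a::euclidean_space \<Rightarrow> 'a \<Rightarrow> 'a" where
  "refl b x = x - (x \<bullet> b) *\<^sub>R coroot b"

lemma coroot_inner: "b \<noteq> 0 \<Longrightarrow> b \<bullet> coroot b = 2"
  by (simp add: coroot_def inner_commute)

lemma coroot_inner': "b \<noteq> 0 \<Longrightarrow> coroot b \<bullet> b = 2"
  by (simp add: coroot_def)

lemma refl_refl: "b \<noteq> 0 \<Longrightarrow> refl b (refl b x) = x"
  by (simp add: refl_def inner_diff_left coroot_inner' algebra_simps)

lemma refl_inner: "b \<noteq> 0 \<Longrightarrow> refl b x \<bullet> refl b y = x \<bullet> y"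
  unfolding refl_def coroot_def
  by (simp add: inner_diff_left inner_diff_right algebra_simps inner_commute power2_eq_square)

lemma linear_refl: "linear (refl b)"
  by (rule linearI) (simp_all add: refl_def inner_add_left scaleR_add_left algebra_simps)

lemma refl_self: "b \<noteq> 0 \<Longrightarrow> refl b b = - b"
  by (simp add: refl_def coroot_def algebra_simps scaleR_2)


lemma indep_coeff:
  fixes S :: "'a::euclidean_space set"
  assumes "finite S" "independent S" "(\<Sum>v\<in>S. u v *\<^sub>R v) = 0" "v \<in> S"
  shows "u v = 0"
  using assms dependent_finite[OF assms(1)] by blast

lemma orth_refl: "b \<noteq> 0 \<Longrightarrow> orthogonal_transformation (refl b)"
  by (simp add: orthogonal_transformation_def linear_refl refl_inner)

locale RS =
  fixes \<Phi> \<Delta> :: "'a::euclidean_space set" and \<theta> z0 :: 'a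
  assumes rs: "root_system \<Phi>" and ss: "simple_system \<Phi> \<Delta>" and hr: "highest_root \<Phi> \<Delta> \<theta>"
    and z0: "z0 \<in> interior (fundA \<Delta> \<theta>)"
begin

lemma finPhi: "finite \<Phi>" using rs by (simp add: root_system_def)
lemma zero_notin: "0 \<notin> \<Phi>" using rs by (simp add: root_system_def)
lemma nz: "\<beta> \<in> \<Phi> \<Longrightarrow> \<beta> \<noteq> 0" using zero_notin by blast
lemma refl_closed: "\<alpha> \<in> \<Phi> \<Longrightarrow> \<beta> \<in> \<Phi> \<Longrightarrow> refl \<alpha> \<beta> \<in> \<Phi>"
  using rs by (simp add: root_system_def refl_def)
lemma cint: "\<alpha> \<in> \<Phi> \<Longrightarrow> \<beta> \<in> \<Phi> \<Longrightarrow> \<beta> \<bullet> coroot \<alpha> \<in> \<int>"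
  using rs by (simp add: root_system_def)
lemma reduced: "\<alpha> \<in> \<Phi> \<Longrightarrow> c *\<^sub>R \<alpha> \<in> \<Phi> \<Longrightarrow> c = 1 \<or> c = -1"
  using rs by (simp add: root_system_def)
lemma neg_closed: "\<beta> \<in> \<Phi> \<Longrightarrow> -\<beta> \<in> \<Phi>"
  using refl_closed[of \<beta> \<beta>] refl_self[of \<beta>] nz by auto
lemma Delta_sub: "\<Delta> \<subseteq> \<Phi>" using ss by (simp add: simple_system_def)
lemma finDelta: "finite \<Delta>" using Delta_sub finPhi finite_subset by blast
lemma indepDelta: "independent \<Delta>" using ss by (simp add: simple_system_def)
lemma pos_or_neg: "\<beta> \<in> \<Phi> \<Longrightarrow> nonneg_comb \<Delta> \<beta> \<or> nonneg_comb \<Delta> (-\<beta>)"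
  using ss by (simp add: simple_system_def)
lemma theta_in: "\<theta> \<in> \<Phi>" using hr by (simp add: highest_root_def)
lemma theta_high: "\<beta> \<in> \<Phi> \<Longrightarrow> nonneg_comb \<Delta> (\<theta> - \<beta>)" using hr by (simp add: highest_root_def)

definition IA :: "'a set" where
  "IA = {x. (\<forall>\<alpha>\<in>\<Delta>. 0 < x \<bullet> \<alpha>) \<and> x \<bullet> \<theta> < 1}"

lemma IA_open: "open IA"
proof -
  have eq: "IA = (\<Inter>\<alpha>\<in>\<Delta>. {x. x \<bullet> \<alpha> > 0}) \<inter> {x. x \<bullet> \<theta> < 1}"
    by (auto simp: IA_def)
  have o1: "open (\<Inter>\<alpha>\<in>\<Delta>. {x. x \<bullet> \<alpha> > 0})"
    using finDelta by (intro open_INT) (auto simp: inner_commute open_halfspace_gt)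
  have o2: "open {x. x \<bullet> \<theta> < 1}"
    using open_halfspace_lt[of \<theta> 1] by (simp add: inner_commute)
  show ?thesis unfolding eq using o1 o2 by (rule open_Int)
qed

lemma interior_fundA: "interior (fundA \<Delta> \<theta>) = IA"
proof
  show "IA \<subseteq> interior (fundA \<Delta> \<theta>)"
    by (rule interior_maximal[OF _ IA_open]) (auto simp: IA_def fundA_def domC_def less_imp_le)
next
  show "interior (fundA \<Delta> \<theta>) \<subseteq> IA"
  proof
    fix x assume x: "x \<in> interior (fundA \<Delta> \<theta>)"
    then obtain e where e: "e > 0" "ball x e \<subseteq> fundA \<Delta> \<theta>"
      using mem_interior by blast
    have "0 < x \<bullet> \<alpha>" if a: "\<alpha> \<in> \<Delta>" for \<alpha>
    proof -
      have an: "\<alpha> \<noteq> 0" using a Delta_sub nz by blast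
      define y where "y = x - ((e/2) / norm \<alpha>) *\<^sub>R \<alpha>"
      have "dist x y < e" using e an by (simp add: y_def dist_norm)
      then have "y \<in> fundA \<Delta> \<theta>" using e by auto
      then have "0 \<le> y \<bullet> \<alpha>" using a by (auto simp: fundA_def domC_def)
      also have "y \<bullet> \<alpha> = x \<bullet> \<alpha> - (e/2) * norm \<alpha>"
        using an by (simp add: y_def inner_diff_left dot_square_norm power2_eq_square)
      finally have "0 \<le> x \<bullet> \<alpha> - (e/2) * norm \<alpha>" .
      moreover have "(e/2) * norm \<alpha> > 0" using e an by simp
      ultimately show ?thesis by linarith
    qed
    moreover have "x \<bullet> \<theta> < 1"
    proof -
      have an: "\<theta> \<noteq> 0" using theta_in nz by blast
      define y where "y = x + ((e/2) / norm \<theta>) *\<^sub>R \<theta>"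
      have "dist x y < e" using e an by (simp add: y_def dist_norm)
      then have "y \<in> fundA \<Delta> \<theta>" using e by auto
      then have "y \<bullet> \<theta> \<le> 1" by (auto simp: fundA_def)
      also have "y \<bullet> \<theta> = x \<bullet> \<theta> + (e/2) * norm \<theta>"
        using an by (simp add: y_def inner_add_left dot_square_norm power2_eq_square)
      finally have "x \<bullet> \<theta> + (e/2) * norm \<theta> \<le> 1" .
      moreover have "(e/2) * norm \<theta> > 0" using e an by simp
      ultimately show ?thesis by linarith
    qed
    ultimately show "x \<in> IA" by (simp add: IA_def)
  qed
qed

lemma z0_IA: "z0 \<in> IA" using z0 interior_fundA by simp

lemma IA_fundA: "IA \<subseteq> fundA \<Delta> \<theta>"
  by (auto simp: IA_def fundA_def domC_def less_imp_le)

lemma nc_ge: "nonneg_comb \<Delta> \<beta> \<Longrightarrow> x \<in> domC \<Delta> \<Longrightarrow> 0 \<le> x \<bullet> \<beta>"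
  by (auto simp: nonneg_comb_def domC_def inner_sum_right intro!: sum_nonneg)

lemma nc_gt: assumes "nonneg_comb \<Delta> \<beta>" "\<beta> \<noteq> 0" "\<forall>\<alpha>\<in>\<Delta>. 0 < x \<bullet> \<alpha>" shows "0 < x \<bullet> \<beta>"
proof -
  obtain c where c: "\<beta> = (\<Sum>\<alpha>\<in>\<Delta>. real (c \<alpha>) *\<^sub>R \<alpha>)" using assms(1) nonneg_comb_def by blast
  have "\<exists>\<alpha>\<in>\<Delta>. c \<alpha> \<noteq> 0"
  proof (rule ccontr)
    assume "\<not> ?thesis" then have "\<beta> = 0" using c by simp
    then show False using assms by simp
  qed
  then obtain a where a: "a \<in> \<Delta>" "c a > 0" by auto
  have "x \<bullet> \<beta> = (\<Sum>\<alpha>\<in>\<Delta>. real (c \<alpha>) * (x \<bullet> \<alpha>))" by (simp add: c inner_sum_right)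
  also have "\<dots> > 0"
    using a assms(3) finDelta by (intro sum_pos2[of _ a]) (auto intro: less_imp_le)
  finally show ?thesis .
qed

lemma IA_root: assumes "x \<in> IA" "\<gamma> \<in> \<Phi>"
  shows "-1 < x \<bullet> \<gamma> \<and> x \<bullet> \<gamma> < 1 \<and> x \<bullet> \<gamma> \<noteq> 0"
proof -
  have xd: "x \<in> domC \<Delta>" using assms(1) IA_fundA by (auto simp: fundA_def)
  have xp: "\<forall>\<alpha>\<in>\<Delta>. 0 < x \<bullet> \<alpha>" "x \<bullet> \<theta> < 1" using assms(1) by (auto simp: IA_def)
  have *: "0 < x \<bullet> g \<and> x \<bullet> g < 1" if "g \<in> \<Phi>" "nonneg_comb \<Delta> g" for g
  proof -
    have "0 < x \<bullet> g" using nc_gt[OF that(2) nz[OF that(1)] xp(1)] .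
    moreover have "0 \<le> x \<bullet> (\<theta> - g)" using nc_ge[OF theta_high[OF that(1)] xd] .
    ultimately show ?thesis using xp(2) by (simp add: inner_diff_right)
  qed
  show ?thesis
  proof (cases "nonneg_comb \<Delta> \<gamma>")
    case True then show ?thesis using *[OF assms(2)] by auto
  next
    case False
    then have "nonneg_comb \<Delta> (-\<gamma>)" using pos_or_neg[OF assms(2)] by auto
    then show ?thesis using *[OF neg_closed[OF assms(2)]] by auto
  qed
qed

lemma pos_iff: "\<beta> \<in> \<Phi> \<Longrightarrow> nonneg_comb \<Delta> \<beta> \<longleftrightarrow> 0 < z0 \<bullet> \<beta>"
proof
  assume b: "\<beta> \<in> \<Phi>"
  have zp: "\<forall>\<alpha>\<in>\<Delta>. 0 < z0 \<bullet> \<alpha>" using z0_IA by (auto simp: IA_def)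
  { assume "nonneg_comb \<Delta> \<beta>" then show "0 < z0 \<bullet> \<beta>" using nc_gt[OF _ nz[OF b] zp] by blast }
  { assume "0 < z0 \<bullet> \<beta>" show "nonneg_comb \<Delta> \<beta>"
    proof (rule ccontr)
      assume "\<not> ?thesis"
      then have "nonneg_comb \<Delta> (-\<beta>)" using pos_or_neg[OF b] by auto
      then have "0 < z0 \<bullet> (-\<beta>)" using nc_gt[OF _ _ zp, of "-\<beta>"] nz[OF b] by auto
      then show False using \<open>0 < z0 \<bullet> \<beta>\<close> by simp
    qed }
qed

end

fun wd :: "'a::euclidean_space list \<Rightarrow> 'a \<Rightarrow> 'a" where
  "wd [] = id"
| "wd (a # as) = refl a \<circ> wd as"

lemma wd_append: "wd (xs @ ys) = wd xs \<circ> wd ys"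
  by (induction xs) auto

lemma sref_Some: "sref \<theta> (Some \<alpha>) = refl \<alpha>"
  by (rule ext) (simp add: sref_def refl_def)

lemma conj_refl:
  assumes "orthogonal_transformation p" "b \<noteq> 0"
  shows "p \<circ> refl b = refl (p b) \<circ> p"
proof
  fix x
  have l: "linear p" using assms(1) orthogonal_transformation_linear by blast
  have pb: "p b \<bullet> p b = b \<bullet> b" "p x \<bullet> p b = x \<bullet> b" using assms(1) by (auto simp: orthogonal_transformation_def)
  have "p (coroot b) = coroot (p b)"
    by (simp add: coroot_def pb linear_scale[OF l])
  then show "(p \<circ> refl b) x = (refl (p b) \<circ> p) x"
    by (simp add: refl_def linear_diff[OF l] linear_scale[OF l] pb)
qed

lemma comb_single:
  fixes S :: "'a::real_vector set"
  assumes "finite S" "a \<in> S"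
  shows "(\<Sum>\<gamma>\<in>S. (if \<gamma> = a then r else 0) *\<^sub>R \<gamma>) = r *\<^sub>R a"
proof -
  have "(\<Sum>\<gamma>\<in>S. (if \<gamma> = a then r else 0) *\<^sub>R \<gamma>) = (\<Sum>\<gamma>\<in>S. if \<gamma> = a then r *\<^sub>R a else 0)"
    by (rule sum.cong) auto
  also have "\<dots> = r *\<^sub>R a" using assms by (simp add: sum.delta')
  finally show ?thesis .
qed

lemma switch: "\<not> P 0 \<Longrightarrow> P n \<Longrightarrow> \<exists>k<n. \<not> P k \<and> P (Suc k)"
proof (induction n)
  case 0 then show ?case by simp
next
  case (Suc n) then show ?case
    by (cases "P n") (auto intro: less_SucI)
qed

context RS begin

lemma coeff_eq:
  assumes "(\<Sum>\<gamma>\<in>\<Delta>. a \<gamma> *\<^sub>R \<gamma>) = (\<Sum>\<gamma>\<in>\<Delta>. b \<gamma> *\<^sub>R \<gamma>)" "\<gamma> \<in> \<Delta>"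
  shows "a \<gamma> = b \<gamma>"
proof -
  have "(\<Sum>\<gamma>\<in>\<Delta>. (a \<gamma> - b \<gamma>) *\<^sub>R \<gamma>) = 0"
    using assms(1) by (simp add: scaleR_diff_left sum_subtractf)
  then have "a \<gamma> - b \<gamma> = 0" using indep_coeff[OF finDelta indepDelta _ assms(2), of "\<lambda>\<gamma>. a \<gamma> - b \<gamma>"] by simp
  then show ?thesis by simp
qed

lemma simple_nc: "a \<in> \<Delta> \<Longrightarrow> nonneg_comb \<Delta> a"
  unfolding nonneg_comb_def
proof (rule exI[of _ "\<lambda>\<gamma>. if \<gamma> = a then 1 else 0"])
  assume a: "a \<in> \<Delta>"
  have "(\<Sum>\<gamma>\<in>\<Delta>. real (if \<gamma> = a then 1 else 0) *\<^sub>R \<gamma>) = (\<Sum>\<gamma>\<in>\<Delta>. if \<gamma> = a then a else 0)"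
    by (rule sum.cong) auto
  also have "\<dots> = a" using a finDelta by (simp add: sum.delta')
  finally show "a = (\<Sum>\<gamma>\<in>\<Delta>. real (if \<gamma> = a then 1 else 0) *\<^sub>R \<gamma>)" by simp
qed

lemma pos_not_neg: "\<beta> \<in> \<Phi> \<Longrightarrow> nonneg_comb \<Delta> \<beta> \<Longrightarrow> \<not> nonneg_comb \<Delta> (-\<beta>)"
  using pos_iff[of \<beta>] pos_iff[of "-\<beta>"] neg_closed[of \<beta>] by auto

lemma only_alpha:
  assumes a: "\<alpha> \<in> \<Delta>" and g: "\<gamma> \<in> \<Phi>" and c: "\<gamma> = (\<Sum>\<alpha>'\<in>\<Delta>. real (c \<alpha>') *\<^sub>R \<alpha>')" and ne: "\<gamma> \<noteq> \<alpha>"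
  shows "\<exists>\<alpha>'\<in>\<Delta>. \<alpha>' \<noteq> \<alpha> \<and> c \<alpha>' > 0"
proof (rule ccontr)
  assume "\<not> ?thesis"
  then have z: "\<forall>\<alpha>'\<in>\<Delta>. \<alpha>' \<noteq> \<alpha> \<longrightarrow> c \<alpha>' = 0" by auto
  have "\<gamma> = (\<Sum>\<alpha>'\<in>\<Delta>. (if \<alpha>' = \<alpha> then real (c \<alpha>) else 0) *\<^sub>R \<alpha>')"
    unfolding c by (rule sum.cong) (use z in auto)
  also have "\<dots> = real (c \<alpha>) *\<^sub>R \<alpha>" by (rule comb_single[OF finDelta a])
  finally have "\<gamma> = real (c \<alpha>) *\<^sub>R \<alpha>" .
  moreover have "\<alpha> \<in> \<Phi>" using a Delta_sub by blast
  ultimately have "real (c \<alpha>) = 1 \<or> real (c \<alpha>) = -1" using reduced g by metis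
  then have "real (c \<alpha>) = 1" by auto
  then show False using \<open>\<gamma> = real (c \<alpha>) *\<^sub>R \<alpha>\<close> ne by simp
qed

lemma refl_expand: "refl \<alpha> \<beta> = \<beta> - (\<beta> \<bullet> coroot \<alpha>) *\<^sub>R \<alpha>"
  by (simp add: refl_def coroot_def mult.commute)

lemma refl_pos:
  assumes a: "\<alpha> \<in> \<Delta>" and b: "\<beta> \<in> \<Phi>" "nonneg_comb \<Delta> \<beta>" and ne: "\<beta> \<noteq> \<alpha>"
  shows "nonneg_comb \<Delta> (refl \<alpha> \<beta>)"
proof (rule ccontr)
  assume nn: "\<not> ?thesis"
  have aP: "\<alpha> \<in> \<Phi>" using a Delta_sub by blast
  have "nonneg_comb \<Delta> (- refl \<alpha> \<beta>)" using pos_or_neg[OF refl_closed[OF aP b(1)]] nn by auto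
  then obtain d where d: "- refl \<alpha> \<beta> = (\<Sum>\<gamma>\<in>\<Delta>. real (d \<gamma>) *\<^sub>R \<gamma>)" by (auto simp: nonneg_comb_def)
  obtain c where c: "\<beta> = (\<Sum>\<gamma>\<in>\<Delta>. real (c \<gamma>) *\<^sub>R \<gamma>)" using b(2) by (auto simp: nonneg_comb_def)
  define n where "n = \<beta> \<bullet> coroot \<alpha>"
  have "(\<Sum>\<gamma>\<in>\<Delta>. (real (c \<gamma>) + real (d \<gamma>)) *\<^sub>R \<gamma>) = \<beta> + (- refl \<alpha> \<beta>)"
    by (simp only: scaleR_add_left sum.distrib flip: c d)
  also have "\<dots> = n *\<^sub>R \<alpha>" by (simp add: refl_expand n_def)
  also have "\<dots> = (\<Sum>\<gamma>\<in>\<Delta>. (if \<gamma> = \<alpha> then n else 0) *\<^sub>R \<gamma>)" by (rule comb_single[OF finDelta a, symmetric])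
  finally have eq: "(\<Sum>\<gamma>\<in>\<Delta>. (real (c \<gamma>) + real (d \<gamma>)) *\<^sub>R \<gamma>) = (\<Sum>\<gamma>\<in>\<Delta>. (if \<gamma> = \<alpha> then n else 0) *\<^sub>R \<gamma>)" .
  obtain a' where a': "a' \<in> \<Delta>" "a' \<noteq> \<alpha>" "c a' > 0" using only_alpha[OF a b(1) c ne] by blast
  have "real (c a') + real (d a') = 0" using coeff_eq[OF eq a'(1)] a'(2) by simp
  then show False using a'(3) by simp
qed

lemma simple_inner_nonpos:
  assumes a: "\<alpha> \<in> \<Delta>" and a': "\<alpha>' \<in> \<Delta>" and ne: "\<alpha>' \<noteq> \<alpha>"
  shows "\<alpha> \<bullet> \<alpha>' \<le> 0"
proof (rule ccontr)
  assume pos: "\<not> ?thesis"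
  have aP: "\<alpha> \<in> \<Phi>" "\<alpha>' \<in> \<Phi>" using a a' Delta_sub by auto
  define n where "n = \<alpha>' \<bullet> coroot \<alpha>"
  have npos: "n > 0" using pos nz[OF aP(1)]
    by (simp add: n_def coroot_def inner_commute)
  have e1: "refl \<alpha> \<alpha>' = (\<Sum>\<gamma>\<in>\<Delta>. ((if \<gamma> = \<alpha>' then 1 else 0) + (if \<gamma> = \<alpha> then -n else 0)) *\<^sub>R \<gamma>)"
    by (simp add: scaleR_add_left sum.distrib comb_single[OF finDelta a] comb_single[OF finDelta a'] refl_expand n_def)
  show False
  proof (cases "nonneg_comb \<Delta> (refl \<alpha> \<alpha>')")
    case True
    then obtain d where d: "refl \<alpha> \<alpha>' = (\<Sum>\<gamma>\<in>\<Delta>. real (d \<gamma>) *\<^sub>R \<gamma>)" by (auto simp: nonneg_comb_def)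
    have "real (d \<alpha>) = (if \<alpha> = \<alpha>' then 1 else 0) + (if \<alpha> = \<alpha> then -n else 0)"
      using coeff_eq[OF trans[OF d[symmetric] e1] a] .
    then show False using ne npos by simp
  next
    case False
    then have "nonneg_comb \<Delta> (- refl \<alpha> \<alpha>')" using pos_or_neg[OF refl_closed[OF aP]] by auto
    then obtain d where d: "- refl \<alpha> \<alpha>' = (\<Sum>\<gamma>\<in>\<Delta>. real (d \<gamma>) *\<^sub>R \<gamma>)" by (auto simp: nonneg_comb_def)
    have e2: "- refl \<alpha> \<alpha>' = (\<Sum>\<gamma>\<in>\<Delta>. (- ((if \<gamma> = \<alpha>' then 1 else 0) + (if \<gamma> = \<alpha> then -n else 0))) *\<^sub>R \<gamma>)"
      by (subst e1) (simp only: scaleR_minus_left sum_negf)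
    then have "real (d \<alpha>') = - ((if \<alpha>' = \<alpha>' then 1 else 0) + (if \<alpha>' = \<alpha> then -n else 0))"
      using coeff_eq[OF trans[OF d[symmetric] e2] a'] by blast
    then show False using ne by simp
  qed
qed

lemma simple_theta_nonneg:
  assumes a: "\<alpha> \<in> \<Delta>" shows "0 \<le> \<alpha> \<bullet> \<theta>"
proof -
  have aP: "\<alpha> \<in> \<Phi>" using a Delta_sub by auto
  define n where "n = \<theta> \<bullet> coroot \<alpha>"
  obtain d where d: "\<theta> - refl \<alpha> \<theta> = (\<Sum>\<gamma>\<in>\<Delta>. real (d \<gamma>) *\<^sub>R \<gamma>)"
    using theta_high[OF refl_closed[OF aP theta_in]] by (auto simp: nonneg_comb_def)
  have "\<theta> - refl \<alpha> \<theta> = (\<Sum>\<gamma>\<in>\<Delta>. (if \<gamma> = \<alpha> then n else 0) *\<^sub>R \<gamma>)"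
    by (simp add: comb_single[OF finDelta a] refl_expand n_def)
  then have "real (d \<alpha>) = n" using coeff_eq[OF trans[OF d[symmetric]] a] by simp
  then have "0 \<le> n" by simp
  moreover have "\<alpha> \<bullet> \<alpha> > 0" using nz[OF aP] by simp
  ultimately show ?thesis
    by (simp add: n_def coroot_def inner_commute zero_le_divide_iff)
qed

end

context RS begin

lemma finW_wd: "w \<in> finW \<Delta> \<theta> \<longleftrightarrow> (\<exists>as. set as \<subseteq> \<Delta> \<and> w = wd as)"
proof
  assume "w \<in> finW \<Delta> \<theta>"
  then show "\<exists>as. set as \<subseteq> \<Delta> \<and> w = wd as"
  proof (induction rule: finW.induct)
    case finW_id then show ?case by (intro exI[of _ "[]"]) auto
  next
    case (finW_step u \<alpha>)
    then obtain as where "set as \<subseteq> \<Delta>" "u = wd as" by auto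
    then show ?case using finW_step
      by (intro exI[of _ "as @ [\<alpha>]"]) (auto simp: wd_append smul_def sref_Some)
  qed
next
  assume "\<exists>as. set as \<subseteq> \<Delta> \<and> w = wd as"
  then obtain as where as: "set as \<subseteq> \<Delta>" "w = wd as" by auto
  have "set as \<subseteq> \<Delta> \<Longrightarrow> wd as \<in> finW \<Delta> \<theta>"
  proof (induction as rule: rev_induct)
    case Nil then show ?case using finW.finW_id by (simp add: id_def)
  next
    case (snoc a as)
    then have "smul \<theta> (Some a) (wd as) \<in> finW \<Delta> \<theta>" by (intro finW_step) auto
    then show ?case by (simp add: wd_append smul_def sref_Some o_def)
  qed
  then show "w \<in> finW \<Delta> \<theta>" using as by simp
qed

lemma orth_wd: "set as \<subseteq> \<Delta> \<Longrightarrow> orthogonal_transformation (wd as)"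
proof (induction as)
  case Nil then show ?case by (simp add: id_def)
next
  case (Cons a as)
  then have "a \<noteq> 0" using Delta_sub nz by auto
  have "orthogonal_transformation (refl a \<circ> wd as)"
    by (rule orthogonal_transformation_compose[OF orth_refl[OF \<open>a \<noteq> 0\<close>]]) (use Cons in auto)
  then show ?case by (simp add: o_def)
qed

lemma wd_Phi: "set as \<subseteq> \<Delta> \<Longrightarrow> \<beta> \<in> \<Phi> \<Longrightarrow> wd as \<beta> \<in> \<Phi>"
proof (induction as arbitrary: \<beta>)
  case Nil then show ?case by simp
next
  case (Cons a as)
  then show ?case using Delta_sub by (auto intro!: refl_closed)
qed

lemma wd_rev: "set as \<subseteq> \<Delta> \<Longrightarrow> wd (rev as) \<circ> wd as = id"
proof (induction as)
  case Nil then show ?case by simp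
next
  case (Cons a as)
  then have a0: "a \<noteq> 0" using Delta_sub nz by auto
  have "wd (rev (a # as)) \<circ> wd (a # as) = wd (rev as) \<circ> (refl a \<circ> refl a) \<circ> wd as"
    by (simp add: wd_append comp_assoc)
  also have "refl a \<circ> refl a = id" using a0 by (auto simp: refl_refl)
  finally show ?case using Cons by simp
qed

lemma W_fix:
  assumes x: "\<forall>\<alpha>\<in>\<Delta>. 0 < x \<bullet> \<alpha>" and as: "set as \<subseteq> \<Delta>" and C: "wd as x \<in> domC \<Delta>"
  shows "wd as = id"
proof (rule ccontr)
  assume ne: "wd as \<noteq> id"
  define w where "w = wd as"
  define S where "S = {bs. set bs \<subseteq> \<Delta> \<and> wd bs = w}"
  have "as \<in> S" using as by (simp add: S_def w_def)
  then obtain bs where bs: "bs \<in> S" and bmin: "\<And>cs. cs \<in> S \<Longrightarrow> length bs \<le> length cs"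
    using ex_has_least_nat[of "\<lambda>bs. bs \<in> S" as length] by blast
  have bsD: "set bs \<subseteq> \<Delta>" "wd bs = w" using bs by (auto simp: S_def)
  have "bs \<noteq> []" using bsD ne w_def by auto
  then obtain cs a where bca: "bs = cs @ [a]" by (metis rev_exhaust)
  have a: "a \<in> \<Delta>" and cs: "set cs \<subseteq> \<Delta>" using bsD bca by auto
  have aP: "a \<in> \<Phi>" and a0: "a \<noteq> 0" using a Delta_sub nz by auto
  have wa: "w a = - wd cs a"
    using bsD(2)[symmetric] bca a0 linear_neg[OF orthogonal_transformation_linear[OF orth_wd[OF cs]]]
    by (simp add: wd_append refl_self)
  have wx: "w x \<bullet> w a = x \<bullet> a"
    using orth_wd[OF as] by (simp add: w_def orthogonal_transformation_def)
  have neg: "nonneg_comb \<Delta> (- w a)"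
  proof (rule ccontr)
    assume nn: "\<not> nonneg_comb \<Delta> (- w a)"
    have waP: "w a \<in> \<Phi>" using wd_Phi[OF as aP] by (simp add: w_def)
    have "nonneg_comb \<Delta> (w a)" using pos_or_neg[OF waP] nn by auto
    define P where "P k = nonneg_comb \<Delta> (wd (drop k cs) a)" for k
    have PP: "wd (drop k cs) a \<in> \<Phi>" for k
      using wd_Phi[OF _ aP, of "drop k cs"] cs by (meson set_drop_subset order_trans)
    have "P (length cs)" using simple_nc[OF a] by (simp add: P_def)
    moreover have "\<not> P 0"
    proof -
      have "nonneg_comb \<Delta> (- wd cs a)" using \<open>nonneg_comb \<Delta> (w a)\<close> wa by simp
      then show ?thesis using pos_not_neg[OF PP[of 0]] by (auto simp: P_def)
    qed
    ultimately obtain k where k: "k < length cs" "\<not> P k" "P (Suc k)" using switch[of P] by blast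
    define b where "b = cs ! k"
    define p where "p = wd (drop (Suc k) cs)"
    have dk: "drop k cs = b # drop (Suc k) cs" using k(1) by (simp add: b_def Cons_nth_drop_Suc)
    have b: "b \<in> \<Delta>" using k(1) cs by (auto simp: b_def)
    have pcs: "set (drop (Suc k) cs) \<subseteq> \<Delta>" using cs by (meson set_drop_subset order_trans)
    have "p a = b"
    proof (rule ccontr)
      assume "p a \<noteq> b"
      then have "nonneg_comb \<Delta> (refl b (p a))"
        using refl_pos[OF b PP[of "Suc k"]] k(3) by (simp add: P_def p_def)
      then show False using k(2) by (simp add: P_def dk p_def)
    qed
    have op: "orthogonal_transformation p" using orth_wd[OF pcs] by (simp add: p_def)
    have b0: "b \<noteq> 0" using b Delta_sub nz by auto
    have key: "refl b \<circ> p \<circ> refl a = p"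
    proof -
      have "refl b \<circ> p \<circ> refl a = refl b \<circ> (refl b \<circ> p)"
        using conj_refl[OF op a0] \<open>p a = b\<close> by (simp add: comp_assoc)
      also have "\<dots> = p" using b0 by (auto simp: refl_refl)
      finally show ?thesis .
    qed
    have cseq: "cs = take k cs @ b # drop (Suc k) cs" unfolding b_def by (rule id_take_nth_drop[OF k(1)])
    have "bs = take k cs @ [b] @ drop (Suc k) cs @ [a]"
      using bca arg_cong[of _ _ "\<lambda>l. l @ [a]", OF cseq] by simp
    then have "wd bs = wd (take k cs) \<circ> (refl b \<circ> p \<circ> refl a)"
      by (simp add: wd_append p_def comp_assoc)
    then have "wd (take k cs @ drop (Suc k) cs) = w"
      using key bsD(2) by (simp add: wd_append p_def)
    moreover have "set (take k cs @ drop (Suc k) cs) \<subseteq> \<Delta>"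
      using cs by (auto dest: in_set_takeD in_set_dropD)
    ultimately have "take k cs @ drop (Suc k) cs \<in> S" by (simp add: S_def)
    from bmin[OF this] show False using k(1) bca by simp
  qed
  have "0 \<le> w x \<bullet> (- w a)" using nc_ge[OF neg] C by (simp add: w_def)
  moreover have "0 < x \<bullet> a" using x a by blast
  ultimately show False using wx by simp
qed

lemma refl_neg: "refl (-b) = refl b"
  by (rule ext) (simp add: refl_def coroot_def)

lemma refl_in_W_pos:
  "\<beta> \<in> \<Phi> \<Longrightarrow> nonneg_comb \<Delta> \<beta> \<Longrightarrow> \<exists>as. set as \<subseteq> \<Delta> \<and> wd as = refl \<beta>"
proof (induction \<beta> rule: measure_induct_rule[where f="\<lambda>\<beta>. card {\<beta>'\<in>\<Phi>. z0 \<bullet> \<beta>' < z0 \<bullet> \<beta>}"])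
  case (less \<beta>)
  show ?case
  proof (cases "\<beta> \<in> \<Delta>")
    case True then show ?thesis by (intro exI[of _ "[\<beta>]"]) auto
  next
    case False
    obtain c where c: "\<beta> = (\<Sum>\<gamma>\<in>\<Delta>. real (c \<gamma>) *\<^sub>R \<gamma>)" using less(3) by (auto simp: nonneg_comb_def)
    have "0 < \<beta> \<bullet> \<beta>" using nz[OF less(2)] by simp
    also have "\<beta> \<bullet> \<beta> = (\<Sum>\<gamma>\<in>\<Delta>. real (c \<gamma>) * (\<beta> \<bullet> \<gamma>))"
      by (subst (2) c) (simp add: inner_sum_right)
    finally have "\<exists>\<gamma>\<in>\<Delta>. 0 < real (c \<gamma>) * (\<beta> \<bullet> \<gamma>)"
      by (meson not_le sum_nonpos)
    then obtain \<gamma> where g: "\<gamma> \<in> \<Delta>" "0 < real (c \<gamma>) * (\<beta> \<bullet> \<gamma>)" by blast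
    have bg: "0 < \<beta> \<bullet> \<gamma>" using g(2) by (simp add: zero_less_mult_iff)
    have gP: "\<gamma> \<in> \<Phi>" and g0: "\<gamma> \<noteq> 0" using g Delta_sub nz by auto
    define \<beta>' where "\<beta>' = refl \<gamma> \<beta>"
    have b'P: "\<beta>' \<in> \<Phi>" using refl_closed[OF gP less(2)] by (simp add: \<beta>'_def)
    have ne: "\<beta> \<noteq> \<gamma>" using False g by auto
    have b'pos: "nonneg_comb \<Delta> \<beta>'" using refl_pos[OF g(1) less(2,3) ne] by (simp add: \<beta>'_def)
    have n: "0 < \<beta> \<bullet> coroot \<gamma>" using bg g0 by (simp add: coroot_def)
    have zg: "0 < z0 \<bullet> \<gamma>" using z0_IA g(1) by (auto simp: IA_def)
    have lt: "z0 \<bullet> \<beta>' < z0 \<bullet> \<beta>"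
      using n zg by (simp add: \<beta>'_def refl_expand inner_diff_right)
    have "{\<beta>''\<in>\<Phi>. z0 \<bullet> \<beta>'' < z0 \<bullet> \<beta>'} \<subset> {\<beta>''\<in>\<Phi>. z0 \<bullet> \<beta>'' < z0 \<bullet> \<beta>}"
      using lt b'P by auto
    then have "card {\<beta>''\<in>\<Phi>. z0 \<bullet> \<beta>'' < z0 \<bullet> \<beta>'} < card {\<beta>''\<in>\<Phi>. z0 \<bullet> \<beta>'' < z0 \<bullet> \<beta>}"
      using finPhi by (intro psubset_card_mono) auto
    then obtain as where as: "set as \<subseteq> \<Delta>" "wd as = refl \<beta>'" using less(1) b'P b'pos by blast
    have bb: "refl \<gamma> \<beta>' = \<beta>" using g0 by (simp add: \<beta>'_def refl_refl)
    have "refl \<gamma> \<circ> refl \<beta>' = refl \<beta> \<circ> refl \<gamma>"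
      using conj_refl[OF orth_refl[OF g0] nz[OF b'P]] bb by simp
    then have "refl \<gamma> \<circ> refl \<beta>' \<circ> refl \<gamma> = refl \<beta>"
      using g0 by (auto simp: fun_eq_iff refl_refl)
    moreover have "wd ([\<gamma>] @ as @ [\<gamma>]) = refl \<gamma> \<circ> refl \<beta>' \<circ> refl \<gamma>"
      by (simp add: wd_append as(2) comp_assoc)
    ultimately show ?thesis using as g(1)
      by (intro exI[of _ "[\<gamma>] @ as @ [\<gamma>]"]) auto
  qed
qed

lemma refl_in_W: "\<beta> \<in> \<Phi> \<Longrightarrow> \<exists>as. set as \<subseteq> \<Delta> \<and> wd as = refl \<beta>"
  using refl_in_W_pos[of \<beta>] refl_in_W_pos[of "-\<beta>"] pos_or_neg[of \<beta>] neg_closed[of \<beta>] refl_neg[of \<beta>]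
  by auto

end

context RS begin

definition alph :: "'a option \<Rightarrow> 'a" where "alph j = (case j of Some a \<Rightarrow> a | None \<Rightarrow> \<theta>)"
definition cc :: "'a option \<Rightarrow> real" where "cc j = (case j of Some a \<Rightarrow> 0 | None \<Rightarrow> 1)"

lemma sref_eq: "sref \<theta> j x = x - (x \<bullet> alph j - cc j) *\<^sub>R coroot (alph j)"
  by (cases j) (simp_all add: sref_def alph_def cc_def)

lemma wall_eq: "wall \<theta> j = {x. x \<bullet> alph j = cc j}"
  by (cases j) (simp_all add: wall_def alph_def cc_def)

lemma alph_in: "j \<in> aff_idx \<Delta> \<Longrightarrow> alph j \<in> \<Phi>"
  using Delta_sub theta_in by (auto simp: aff_idx_def alph_def)

lemma cc_int: "cc j \<in> \<int>" by (cases j) (simp_all add: cc_def)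

definition good :: "('a \<Rightarrow> 'a) \<Rightarrow> bool" where
  "good u \<longleftrightarrow> (\<exists>L t. orthogonal_transformation L \<and> L ` \<Phi> \<subseteq> \<Phi> \<and> u = (\<lambda>x. L x + t) \<and> (\<forall>\<gamma>\<in>\<Phi>. t \<bullet> \<gamma> \<in> \<int>))"

lemma perm:
  assumes "orthogonal_transformation L" "L ` \<Phi> \<subseteq> \<Phi>" shows "L ` \<Phi> = \<Phi>"
  using endo_inj_surj[OF finPhi assms(2)] orthogonal_transformation_inj[OF assms(1)]
  by (meson inj_on_subset subset_UNIV)

lemma sref_split: "sref \<theta> j x = refl (alph j) x + cc j *\<^sub>R coroot (alph j)"
  by (simp add: sref_eq refl_def algebra_simps)

lemma good_sref: assumes "good u" "j \<in> aff_idx \<Delta>" shows "good (u \<circ> sref \<theta> j)"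
proof -
  obtain L t where Lt: "orthogonal_transformation L" "L ` \<Phi> \<subseteq> \<Phi>" "u = (\<lambda>x. L x + t)" "\<forall>\<gamma>\<in>\<Phi>. t \<bullet> \<gamma> \<in> \<int>"
    using assms(1) good_def by blast
  define a where "a = alph j"
  have aP: "a \<in> \<Phi>" using alph_in[OF assms(2)] by (simp add: a_def)
  have a0: "a \<noteq> 0" using nz[OF aP] .
  have lL: "linear L" using Lt(1) orthogonal_transformation_linear by blast
  define L' where "L' = L \<circ> refl a"
  define t' where "t' = cc j *\<^sub>R L (coroot a) + t"
  have o: "orthogonal_transformation L'" unfolding L'_def
    by (rule orthogonal_transformation_compose[OF Lt(1) orth_refl[OF a0]])
  have p: "L' ` \<Phi> \<subseteq> \<Phi>" using Lt(2) refl_closed[OF aP] by (auto simp: L'_def)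
  have e: "u \<circ> sref \<theta> j = (\<lambda>x. L' x + t')"
    by (rule ext) (simp add: Lt(3) sref_split L'_def t'_def a_def linear_add[OF lL] linear_scale[OF lL])
  have "t' \<bullet> \<gamma> \<in> \<int>" if g: "\<gamma> \<in> \<Phi>" for \<gamma>
  proof -
    obtain \<gamma>' where g': "\<gamma>' \<in> \<Phi>" "\<gamma> = L \<gamma>'" using perm[OF Lt(1,2)] g by blast
    have "L (coroot a) \<bullet> \<gamma> = \<gamma>' \<bullet> coroot a"
      using Lt(1) g' by (simp add: orthogonal_transformation_def inner_commute)
    then have "L (coroot a) \<bullet> \<gamma> \<in> \<int>" using cint[OF aP g'(1)] by simp
    then show ?thesis using Lt(4) g cc_int by (simp add: t'_def inner_add_left)
  qed
  then show ?thesis using o p e unfolding good_def by blast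
qed

lemma good_id: "good id"
  unfolding good_def by (rule exI[of _ id], rule exI[of _ 0]) (auto simp: id_def)

lemma affW_good: "u \<in> affW \<Delta> \<theta> \<Longrightarrow> good u"
proof (induction rule: affW.induct)
  case affW_id then show ?case by (rule good_id)
next
  case (affW_step u j) then show ?case unfolding smul_def by (intro good_sref)
qed

lemma good_wd: assumes "good u" "set as \<subseteq> \<Delta>" shows "good (wd as \<circ> u)"
proof -
  obtain L t where Lt: "orthogonal_transformation L" "L ` \<Phi> \<subseteq> \<Phi>" "u = (\<lambda>x. L x + t)" "\<forall>\<gamma>\<in>\<Phi>. t \<bullet> \<gamma> \<in> \<int>"
    using assms(1) good_def by blast
  define w where "w = wd as"
  have ow: "orthogonal_transformation w" using orth_wd[OF assms(2)] by (simp add: w_def)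
  have wP: "w ` \<Phi> \<subseteq> \<Phi>" using wd_Phi[OF assms(2)] by (auto simp: w_def)
  have lw: "linear w" using ow orthogonal_transformation_linear by blast
  have o: "orthogonal_transformation (w \<circ> L)" by (rule orthogonal_transformation_compose[OF ow Lt(1)])
  have p: "(w \<circ> L) ` \<Phi> \<subseteq> \<Phi>" using Lt(2) wP by auto
  have e: "w \<circ> u = (\<lambda>x. (w \<circ> L) x + w t)"
    by (rule ext) (simp add: Lt(3) linear_add[OF lw])
  have "w t \<bullet> \<gamma> \<in> \<int>" if g: "\<gamma> \<in> \<Phi>" for \<gamma>
  proof -
    obtain \<gamma>' where g': "\<gamma>' \<in> \<Phi>" "\<gamma> = w \<gamma>'" using perm[OF ow wP] g by blast
    have "w t \<bullet> \<gamma> = t \<bullet> \<gamma>'" using ow g' by (simp add: orthogonal_transformation_def)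
    then show ?thesis using Lt(4) g'(1) by simp
  qed
  then show ?thesis using o p e unfolding good_def w_def by blast
qed

definition lin :: "('a \<Rightarrow> 'a) \<Rightarrow> 'a \<Rightarrow> 'a" where "lin u x = u x - u 0"

lemma good_lin:
  assumes "good u"
  shows "orthogonal_transformation (lin u)" "lin u ` \<Phi> \<subseteq> \<Phi>" "\<And>x. u x = lin u x + u 0" "\<forall>\<gamma>\<in>\<Phi>. u 0 \<bullet> \<gamma> \<in> \<int>"
proof -
  obtain L t where Lt: "orthogonal_transformation L" "L ` \<Phi> \<subseteq> \<Phi>" "u = (\<lambda>x. L x + t)" "\<forall>\<gamma>\<in>\<Phi>. t \<bullet> \<gamma> \<in> \<int>"
    using assms(1) good_def by blast
  have L0: "L 0 = 0" using linear_0[OF orthogonal_transformation_linear[OF Lt(1)]] .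
  have "lin u = L" by (rule ext) (simp add: lin_def Lt(3) L0)
  moreover have "u 0 = t" by (simp add: Lt(3) L0)
  ultimately show "orthogonal_transformation (lin u)" "lin u ` \<Phi> \<subseteq> \<Phi>" "\<And>x. u x = lin u x + u 0" "\<forall>\<gamma>\<in>\<Phi>. u 0 \<bullet> \<gamma> \<in> \<int>"
    using Lt by (auto simp: lin_def)
qed

definition bet :: "('a \<Rightarrow> 'a) \<Rightarrow> 'a option \<Rightarrow> 'a" where "bet u j = lin u (alph j)"
definition kap :: "('a \<Rightarrow> 'a) \<Rightarrow> 'a option \<Rightarrow> real" where "kap u j = cc j + u 0 \<bullet> bet u j"

lemma bet_in: "good u \<Longrightarrow> j \<in> aff_idx \<Delta> \<Longrightarrow> bet u j \<in> \<Phi>"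
  using good_lin(2) alph_in by (auto simp: bet_def)

lemma kap_int: "good u \<Longrightarrow> j \<in> aff_idx \<Delta> \<Longrightarrow> kap u j \<in> \<int>"
  using good_lin(4) bet_in cc_int by (simp add: kap_def)

lemma F2: assumes "good u" shows "u x \<bullet> bet u j - kap u j = x \<bullet> alph j - cc j"
proof -
  have "u x \<bullet> bet u j = lin u x \<bullet> lin u (alph j) + u 0 \<bullet> bet u j"
    by (subst good_lin(3)[OF assms]) (simp add: bet_def inner_add_left)
  also have "lin u x \<bullet> lin u (alph j) = x \<bullet> alph j"
    using good_lin(1)[OF assms] by (simp add: orthogonal_transformation_def)
  finally show ?thesis by (simp add: kap_def)
qed

lemma F1: assumes "good u" shows "hyp \<theta> u j = {y. y \<bullet> bet u j = kap u j}"
proof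
  show "hyp \<theta> u j \<subseteq> {y. y \<bullet> bet u j = kap u j}"
  proof
    fix y assume "y \<in> hyp \<theta> u j"
    then obtain x where x: "x \<bullet> alph j = cc j" "y = u x" by (auto simp: hyp_def wall_eq)
    then show "y \<in> {y. y \<bullet> bet u j = kap u j}" using F2[OF assms, of x j] by simp
  qed
next
  show "{y. y \<bullet> bet u j = kap u j} \<subseteq> hyp \<theta> u j"
  proof
    fix y assume y: "y \<in> {y. y \<bullet> bet u j = kap u j}"
    obtain x where x: "lin u x = y - u 0"
      using orthogonal_transformation_surj[OF good_lin(1)[OF assms]] by (metis surjD)
    have ux: "u x = y" using x good_lin(3)[OF assms, of x] by simp
    then have "x \<bullet> alph j = cc j" using F2[OF assms, of x j] y by simp
    then show "y \<in> hyp \<theta> u j" using ux by (auto simp: hyp_def wall_eq)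
  qed
qed

lemma sref_side: "sref \<theta> j x \<bullet> alph j - cc j = - (x \<bullet> alph j - cc j)" if "j \<in> aff_idx \<Delta>"
proof -
  have "alph j \<noteq> 0" using nz[OF alph_in[OF that]] .
  then show ?thesis by (simp add: sref_eq inner_diff_left coroot_inner' algebra_simps)
qed

lemma avoid:
  assumes "good u" "x \<in> IA" "\<gamma> \<in> \<Phi>" "m \<in> \<int>" shows "u x \<bullet> \<gamma> \<noteq> m"
proof
  assume eq: "u x \<bullet> \<gamma> = m"
  obtain \<gamma>' where g': "\<gamma>' \<in> \<Phi>" "\<gamma> = lin u \<gamma>'" using perm[OF good_lin(1,2)[OF assms(1)]] assms(3) by blast
  have "u x \<bullet> \<gamma> = x \<bullet> \<gamma>' + u 0 \<bullet> \<gamma>"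
    using good_lin(1)[OF assms(1)] g'
    by (subst good_lin(3)[OF assms(1)]) (simp add: inner_add_left orthogonal_transformation_def)
  then have "x \<bullet> \<gamma>' = m - u 0 \<bullet> \<gamma>" using eq by simp
  moreover have "m - u 0 \<bullet> \<gamma> \<in> \<int>" using good_lin(4)[OF assms(1)] assms(3,4) by simp
  ultimately have "x \<bullet> \<gamma>' \<in> \<int>" by simp
  then obtain n :: int where n: "x \<bullet> \<gamma>' = of_int n" by (auto elim: Ints_cases)
  have "-1 < x \<bullet> \<gamma>' \<and> x \<bullet> \<gamma>' < 1 \<and> x \<bullet> \<gamma>' \<noteq> 0" using IA_root[OF assms(2) g'(1)] .
  then show False using n by auto
qed

lemma good_interior: assumes "good u" shows "interior (u ` S) = u ` interior S"
proof -
  have l: "linear (lin u)" "inj (lin u)"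
    using good_lin(1)[OF assms] orthogonal_transformation_linear orthogonal_transformation_inj by auto
  have e: "u ` T = (+) (u 0) ` (lin u ` T)" for T
    by (auto simp: image_image lin_def)
  show ?thesis unfolding e interior_translation interior_injective_linear_image[OF l] ..
qed

lemma interior_alcove: "good u \<Longrightarrow> interior (alcove \<Delta> \<theta> u) = u ` IA"
  by (simp add: alcove_def good_interior interior_fundA)

lemma good_comb: assumes "good u" shows "u ((1 - l) *\<^sub>R a + l *\<^sub>R b) = (1 - l) *\<^sub>R u a + l *\<^sub>R u b"
proof -
  have lu: "linear (lin u)" using good_lin(1)[OF assms] orthogonal_transformation_linear by blast
  have "lin u ((1 - l) *\<^sub>R a + l *\<^sub>R b) = (1 - l) *\<^sub>R lin u a + l *\<^sub>R lin u b"
    by (simp add: linear_add[OF lu] linear_scale[OF lu])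
  then show ?thesis by (simp add: lin_def algebra_simps)
qed

end

lemma hyp_unique:
  fixes \<beta> :: "'a::euclidean_space"
  assumes "\<beta> \<noteq> 0" "\<beta>' \<noteq> 0" "{x. x \<bullet> \<beta> = k} = {x. x \<bullet> \<beta>' = k'}"
  shows "\<exists>c. c \<noteq> 0 \<and> \<beta>' = c *\<^sub>R \<beta> \<and> k' = c * k"
proof -
  have bb: "\<beta> \<bullet> \<beta> \<noteq> 0" using assms(1) by simp
  define x0 where "x0 = (k / (\<beta> \<bullet> \<beta>)) *\<^sub>R \<beta>"
  have x0: "x0 \<bullet> \<beta> = k" using bb by (simp add: x0_def)
  define c where "c = (\<beta>' \<bullet> \<beta>) / (\<beta> \<bullet> \<beta>)"
  define v where "v = \<beta>' - c *\<^sub>R \<beta>"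
  have vb: "v \<bullet> \<beta> = 0" using bb by (simp add: v_def c_def inner_diff_left)
  have "x0 \<in> {x. x \<bullet> \<beta>' = k'}" using x0 assms(3) by blast
  then have x0': "x0 \<bullet> \<beta>' = k'" by simp
  have "x0 + v \<in> {x. x \<bullet> \<beta> = k}" using x0 vb by (simp add: inner_add_left)
  then have "x0 + v \<in> {x. x \<bullet> \<beta>' = k'}" using assms(3) by blast
  then have "v \<bullet> \<beta>' = 0" using x0' by (simp add: inner_add_left)
  then have "v \<bullet> v = 0" using vb by (simp add: v_def inner_diff_right)
  then have v0: "v = 0" by simp
  then have b': "\<beta>' = c *\<^sub>R \<beta>" by (simp add: v_def)
  then have "c \<noteq> 0" using assms(2) by auto
  moreover have "k' = c * k" using x0' x0 b' by simp
  ultimately show ?thesis using b' by blast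
qed

lemma sep_iff:
  fixes \<beta> :: "'a::euclidean_space"
  assumes b: "\<beta> \<noteq> 0" and x0: "x0 \<in> interior X" and y0: "y0 \<in> interior Y"
    and sX: "\<forall>x\<in>interior X. if pX then k < x \<bullet> \<beta> else x \<bullet> \<beta> < k"
    and sY: "\<forall>y\<in>interior Y. if pY then k < y \<bullet> \<beta> else y \<bullet> \<beta> < k"
  shows "separates {x. x \<bullet> \<beta> = k} X Y \<longleftrightarrow> pX \<noteq> pY"
proof
  assume "pX \<noteq> pY"
  then show "separates {x. x \<bullet> \<beta> = k} X Y"
    unfolding separates_def using b sX sY by (intro exI[of _ \<beta>] exI[of _ k]) (cases pX; auto)
next
  assume "separates {x. x \<bullet> \<beta> = k} X Y"
  then obtain \<beta>' k' where bk: "\<beta>' \<noteq> 0" "{x. x \<bullet> \<beta> = k} = {x. x \<bullet> \<beta>' = k'}"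
    "((\<forall>x\<in>interior X. x \<bullet> \<beta>' < k') \<and> (\<forall>y\<in>interior Y. k' < y \<bullet> \<beta>')) \<or>
       ((\<forall>x\<in>interior X. k' < x \<bullet> \<beta>') \<and> (\<forall>y\<in>interior Y. y \<bullet> \<beta>' < k'))"
    unfolding separates_def by blast
  obtain c where c: "c \<noteq> 0" "\<beta>' = c *\<^sub>R \<beta>" "k' = c * k" using hyp_unique[OF b bk(1,2)] by blast
  have neg: "(x0 \<bullet> \<beta>' - k') * (y0 \<bullet> \<beta>' - k') < 0"
    using bk(3) x0 y0 by (auto simp: mult_less_0_iff)
  have e: "(x0 \<bullet> \<beta>' - k') * (y0 \<bullet> \<beta>' - k') = c * c * ((x0 \<bullet> \<beta> - k) * (y0 \<bullet> \<beta> - k))"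
    using c by (simp add: algebra_simps)
  show "pX \<noteq> pY"
  proof
    assume "pX = pY"
    then have "(x0 \<bullet> \<beta> - k) * (y0 \<bullet> \<beta> - k) > 0"
      using sX sY x0 y0 by (cases pX) (auto simp: mult_pos_pos mult_neg_neg)
    moreover have "c * c > 0" using c(1) by (cases "c > 0") (auto simp: mult_neg_neg)
    ultimately show False using neg e by (metis mult_pos_pos not_less_iff_gr_or_eq)
  qed
qed

lemma lim_lemma:
  fixes A B :: real
  assumes "\<forall>l. 0 \<le> l \<and> l < 1 \<longrightarrow> 0 < (1 - l) * A + l * B" shows "0 \<le> B"
proof (rule ccontr)
  assume "\<not> 0 \<le> B"
  then have B: "B < 0" by simp
  have A: "0 < A" using assms[rule_format, of 0] by simp
  define l where "l = A / (A - B)"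
  have "0 \<le> l" "l < 1" using A B by (auto simp: l_def divide_simps)
  moreover have "(1 - l) * A + l * B = 0" using A B by (simp add: l_def field_simps)
  ultimately show False using assms by force
qed

lemma near1:
  fixes A B :: real
  assumes "0 < B" shows "\<exists>l. 0 \<le> l \<and> l < 1 \<and> 0 < (1 - l) * A + l * B"
proof (cases "0 \<le> A")
  case True then show ?thesis using assms by (intro exI[of _ "1/2"]) auto
next
  case False
  define r where "r = - A / (B - A)"
  have r: "0 < r" "r < 1" using False assms by (auto simp: r_def divide_simps)
  define l where "l = (1 + r) / 2"
  have "A + r * (B - A) = 0" using False assms by (simp add: r_def field_simps)
  moreover have "r * (B - A) < l * (B - A)" using r False assms by (simp add: l_def)
  ultimately have "0 < A + l * (B - A)" by linarith
  then have "0 < (1 - l) * A + l * B" by (simp add: algebra_simps)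
  moreover have "0 \<le> l" "l < 1" using r by (simp_all add: l_def)
  ultimately show ?thesis by blast
qed

lemma comb_pos: "0 < (A::real) \<Longrightarrow> 0 < B \<Longrightarrow> 0 \<le> m \<Longrightarrow> m \<le> 1 \<Longrightarrow> 0 < (1 - m) * A + m * B"
proof -
  assume a: "0 < A" "0 < B" "0 \<le> m" "m \<le> 1"
  have "0 \<le> (1 - m) * A" "0 \<le> m * B" using a by simp_all
  moreover have "m = 0 \<or> 0 < m * B" using a by (cases "m = 0") (auto intro: mult_pos_pos)
  ultimately show ?thesis using a by (metis add.commute add_cancel_right_right add_pos_nonneg diff_zero mult_1 mult_zero_left)
qed

lemma comb_pos2: "0 < (A::real) \<Longrightarrow> 0 \<le> B \<Longrightarrow> 0 \<le> m \<Longrightarrow> m < 1 \<Longrightarrow> 0 < (1 - m) * A + m * B"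
proof -
  assume a: "0 < A" "0 \<le> B" "0 \<le> m" "m < 1"
  have "0 < (1 - m) * A" "0 \<le> m * B" using a by simp_all
  then show ?thesis by linarith
qed

context RS begin

lemma IA_convex:
  assumes "a \<in> IA" "b \<in> IA" "0 \<le> m" "m \<le> 1" shows "(1 - m) *\<^sub>R a + m *\<^sub>R b \<in> IA"
proof -
  have "0 < ((1 - m) *\<^sub>R a + m *\<^sub>R b) \<bullet> \<alpha>" if "\<alpha> \<in> \<Delta>" for \<alpha>
    using comb_pos[of "a \<bullet> \<alpha>" "b \<bullet> \<alpha>" m] assms that by (auto simp: IA_def inner_add_left)
  moreover have "0 < (1 - m) * (1 - a \<bullet> \<theta>) + m * (1 - b \<bullet> \<theta>)"
    using comb_pos[of "1 - a \<bullet> \<theta>" "1 - b \<bullet> \<theta>" m] assms by (auto simp: IA_def)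
  then have "((1 - m) *\<^sub>R a + m *\<^sub>R b) \<bullet> \<theta> < 1" by (simp add: inner_add_left algebra_simps)
  ultimately show ?thesis by (simp add: IA_def)
qed

lemma seg_IA:
  assumes "a \<in> IA" "b \<in> fundA \<Delta> \<theta>" "0 \<le> m" "m < 1" shows "(1 - m) *\<^sub>R a + m *\<^sub>R b \<in> IA"
proof -
  have "0 < ((1 - m) *\<^sub>R a + m *\<^sub>R b) \<bullet> \<alpha>" if "\<alpha> \<in> \<Delta>" for \<alpha>
    using comb_pos2[of "a \<bullet> \<alpha>" "b \<bullet> \<alpha>" m] assms that by (auto simp: IA_def fundA_def domC_def inner_add_left)
  moreover have "0 < (1 - m) * (1 - a \<bullet> \<theta>) + m * (1 - b \<bullet> \<theta>)"
    using comb_pos2[of "1 - a \<bullet> \<theta>" "1 - b \<bullet> \<theta>" m] assms by (auto simp: IA_def fundA_def)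
  then have "((1 - m) *\<^sub>R a + m *\<^sub>R b) \<bullet> \<theta> < 1" by (simp add: inner_add_left algebra_simps)
  ultimately show ?thesis by (simp add: IA_def)
qed

lemma pos_on_fundA:
  assumes u: "good u" and g: "\<gamma> \<in> \<Phi>" and x1: "x1 \<in> IA" "0 < u x1 \<bullet> \<gamma>"
  shows "\<forall>y\<in>fundA \<Delta> \<theta>. 0 \<le> u y \<bullet> \<gamma>"
proof -
  have ne: "u x \<bullet> \<gamma> \<noteq> 0" if "x \<in> IA" for x using avoid[OF u that g, of 0] by simp
  have posIA: "0 < u x \<bullet> \<gamma>" if x: "x \<in> IA" for x
  proof (rule ccontr)
    assume "\<not> 0 < u x \<bullet> \<gamma>"
    then have xn: "u x \<bullet> \<gamma> < 0" using ne[OF x] by linarith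
    define A where "A = u x1 \<bullet> \<gamma>"
    define B where "B = u x \<bullet> \<gamma>"
    define m where "m = A / (A - B)"
    have m: "0 \<le> m" "m \<le> 1" using x1(2) xn by (auto simp: m_def A_def B_def divide_simps)
    have "(1 - m) * A + m * B = 0" using x1(2) xn by (simp add: m_def A_def B_def field_simps)
    moreover have "u ((1 - m) *\<^sub>R x1 + m *\<^sub>R x) \<bullet> \<gamma> = (1 - m) * A + m * B"
      by (simp add: good_comb[OF u] inner_add_left A_def B_def)
    moreover have "(1 - m) *\<^sub>R x1 + m *\<^sub>R x \<in> IA" using IA_convex[OF x1(1) x m] .
    ultimately show False using ne by simp
  qed
  show ?thesis
  proof
    fix y assume y: "y \<in> fundA \<Delta> \<theta>"
    have "\<forall>l. 0 \<le> l \<and> l < 1 \<longrightarrow> 0 < (1 - l) * (u z0 \<bullet> \<gamma>) + l * (u y \<bullet> \<gamma>)"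
    proof (intro allI impI)
      fix l :: real assume l: "0 \<le> l \<and> l < 1"
      have "0 < u ((1 - l) *\<^sub>R z0 + l *\<^sub>R y) \<bullet> \<gamma>" using posIA seg_IA[OF z0_IA y] l by blast
      then show "0 < (1 - l) * (u z0 \<bullet> \<gamma>) + l * (u y \<bullet> \<gamma>)"
        by (simp add: good_comb[OF u] inner_add_left)
    qed
    then show "0 \<le> u y \<bullet> \<gamma>" by (rule lim_lemma)
  qed
qed

end

context RS begin

lemma z0_fundA: "z0 \<in> fundA \<Delta> \<theta>" using z0_IA IA_fundA by blast

lemma idx_cases: "j \<in> aff_idx \<Delta> \<Longrightarrow> j = None \<or> (\<exists>\<alpha>\<in>\<Delta>. j = Some \<alpha>)"
  by (auto simp: aff_idx_def)

lemma side_IA: assumes "j \<in> aff_idx \<Delta>" "x \<in> IA"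
  shows "if j \<noteq> None then 0 < x \<bullet> alph j - cc j else x \<bullet> alph j - cc j < 0"
  using idx_cases[OF assms(1)] assms(2) by (auto simp: IA_def alph_def cc_def)

lemma side_alcove: assumes u: "good u" and j: "j \<in> aff_idx \<Delta>" and y: "y \<in> interior (alcove \<Delta> \<theta> u)"
  shows "if j \<noteq> None then kap u j < y \<bullet> bet u j else y \<bullet> bet u j < kap u j"
proof -
  obtain x where x: "x \<in> IA" "y = u x" using y interior_alcove[OF u] by auto
  show ?thesis using side_IA[OF j x(1)] F2[OF u, of x j] x(2) by (auto split: if_splits)
qed

lemma side_A_nz: assumes u: "good u" and j: "j \<in> aff_idx \<Delta>" and k: "kap u j \<noteq> 0"
  and y: "y \<in> interior (fundA \<Delta> \<theta>)"
  shows "if kap u j < 0 then kap u j < y \<bullet> bet u j else y \<bullet> bet u j < kap u j"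
proof -
  have yI: "y \<in> IA" using y interior_fundA by simp
  have b: "-1 < y \<bullet> bet u j" "y \<bullet> bet u j < 1" using IA_root[OF yI bet_in[OF u j]] by auto
  obtain n :: int where n: "kap u j = of_int n" using kap_int[OF u j] by (auto elim: Ints_cases)
  have "n \<noteq> 0" using k n by simp
  then have "n \<le> -1 \<or> 1 \<le> n" by linarith
  then show ?thesis using b n by (auto simp del: of_int_minus)
qed

lemma side_A_z: assumes g: "\<gamma> \<in> \<Phi>" and y: "y \<in> interior (fundA \<Delta> \<theta>)"
  shows "if nonneg_comb \<Delta> \<gamma> then 0 < y \<bullet> \<gamma> else y \<bullet> \<gamma> < 0"
proof -
  have yI: "y \<in> IA" using y interior_fundA by simp
  have yp: "\<forall>\<alpha>\<in>\<Delta>. 0 < y \<bullet> \<alpha>" using yI by (auto simp: IA_def)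
  show ?thesis
  proof (cases "nonneg_comb \<Delta> \<gamma>")
    case True then show ?thesis using nc_gt[OF True nz[OF g] yp] by simp
  next
    case False
    then have "nonneg_comb \<Delta> (-\<gamma>)" using pos_or_neg[OF g] by auto
    then have "0 < y \<bullet> (-\<gamma>)" using nc_gt[OF _ _ yp] nz[OF neg_closed[OF g]] by blast
    then show ?thesis using False by simp
  qed
qed

lemma u_z0_int: "good u \<Longrightarrow> u z0 \<in> interior (alcove \<Delta> \<theta> u)"
  using interior_alcove z0_IA by auto

lemma z0_int: "z0 \<in> interior (fundA \<Delta> \<theta>)" using z0 .

lemma sep_nz: assumes u: "good u" and j: "j \<in> aff_idx \<Delta>" and k: "kap u j \<noteq> 0"
  shows "separates (hyp \<theta> u j) (alcove \<Delta> \<theta> u) (fundA \<Delta> \<theta>) \<longleftrightarrow> (j \<noteq> None) \<noteq> (kap u j < 0)"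
  unfolding F1[OF u]
  by (rule sep_iff[OF nz[OF bet_in[OF u j]] u_z0_int[OF u] z0_int])
     (use side_alcove[OF u j] side_A_nz[OF u j k] in blast)+

lemma sep_z: assumes u: "good u" and j: "j \<in> aff_idx \<Delta>" and k: "kap u j = 0"
  shows "separates (hyp \<theta> u j) (alcove \<Delta> \<theta> u) (fundA \<Delta> \<theta>) \<longleftrightarrow> (j \<noteq> None) \<noteq> nonneg_comb \<Delta> (bet u j)"
  unfolding F1[OF u]
  by (rule sep_iff[OF nz[OF bet_in[OF u j]] u_z0_int[OF u] z0_int])
     (use side_alcove[OF u j] side_A_z[OF bet_in[OF u j]] k in auto)

lemma lin_coroot: assumes "orthogonal_transformation L" shows "L (coroot a) = coroot (L a)"
proof -
  have "L a \<bullet> L a = a \<bullet> a" using assms by (simp add: orthogonal_transformation_def)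
  then show ?thesis using orthogonal_transformation_scaleR[OF assms] by (simp add: coroot_def)
qed

lemma F_sref: assumes u: "good u"
  shows "u (sref \<theta> j x) = u x - (u x \<bullet> bet u j - kap u j) *\<^sub>R coroot (bet u j)"
proof -
  have l: "linear (lin u)" using good_lin(1)[OF u] orthogonal_transformation_linear by blast
  have "u (sref \<theta> j x) = lin u (sref \<theta> j x) + u 0" by (simp add: lin_def)
  also have "lin u (sref \<theta> j x) = lin u x - (x \<bullet> alph j - cc j) *\<^sub>R coroot (bet u j)"
    by (simp add: sref_eq linear_diff[OF l] linear_scale[OF l] lin_coroot[OF good_lin(1)[OF u]] bet_def)
  finally show ?thesis using F2[OF u, of x j] by (simp add: lin_def)
qed

lemma What_good: "v \<in> What \<Delta> \<theta> \<Longrightarrow> good v"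
  by (auto simp: What_def affW_good)

lemma What_C: "v \<in> What \<Delta> \<theta> \<Longrightarrow> x \<in> fundA \<Delta> \<theta> \<Longrightarrow> v x \<in> domC \<Delta>"
  by (auto simp: What_def alcove_def)

lemma G3:
  assumes v: "v \<in> What \<Delta> \<theta>" and j: "j \<in> aff_idx \<Delta>" and k: "kap v j = 0"
  shows "(j \<noteq> None) = nonneg_comb \<Delta> (bet v j)"
    and "\<not> alcove \<Delta> \<theta> (smul \<theta> j v) \<subseteq> domC \<Delta>"
    and "smul \<theta> j v = refl (bet v j) \<circ> v"
proof -
  have u: "good v" using What_good[OF v] .
  define b where "b = bet v j"
  have bP: "b \<in> \<Phi>" using bet_in[OF u j] by (simp add: b_def)
  define s where "s = z0 \<bullet> alph j - cc j"
  have vz: "v z0 \<bullet> b = s" using F2[OF u, of z0 j] k by (simp add: b_def s_def)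
  have vsz: "v (sref \<theta> j z0) \<bullet> b = - s"
    using F2[OF u, of "sref \<theta> j z0" j] k sref_side[OF j, of z0] by (simp add: b_def s_def)
  have sj: "if j \<noteq> None then 0 < s else s < 0" unfolding s_def by (rule side_IA[OF j z0_IA])
  have C: "v z0 \<in> domC \<Delta>" using What_C[OF v z0_fundA] .
  have inA: "v (sref \<theta> j z0) \<in> alcove \<Delta> \<theta> (smul \<theta> j v)"
    using z0_fundA by (auto simp: alcove_def smul_def)
  show eq: "(j \<noteq> None) = nonneg_comb \<Delta> (bet v j)"
  proof (cases "nonneg_comb \<Delta> b")
    case True
    then have "0 \<le> s" using nc_ge[OF True C] vz by simp
    then show ?thesis using sj True by (auto simp: b_def split: if_splits)
  next
    case False
    then have n: "nonneg_comb \<Delta> (-b)" using pos_or_neg[OF bP] by auto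
    then have "0 \<le> - s" using nc_ge[OF n C] vz by simp
    then show ?thesis using sj False by (auto simp: b_def split: if_splits)
  qed
  show "\<not> alcove \<Delta> \<theta> (smul \<theta> j v) \<subseteq> domC \<Delta>"
  proof
    assume sub: "alcove \<Delta> \<theta> (smul \<theta> j v) \<subseteq> domC \<Delta>"
    then have C2: "v (sref \<theta> j z0) \<in> domC \<Delta>" using inA by blast
    show False
    proof (cases "nonneg_comb \<Delta> b")
      case True
      then have "0 \<le> - s" using nc_ge[OF True C2] vsz by simp
      moreover have "j \<noteq> None" using eq True by (simp add: b_def)
      ultimately show False using sj by simp
    next
      case False
      then have n: "nonneg_comb \<Delta> (-b)" using pos_or_neg[OF bP] by auto
      then have "0 \<le> s" using nc_ge[OF n C2] vsz by simp
      moreover have "j = None" using eq False by (simp add: b_def)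
      ultimately show False using sj by simp
    qed
  qed
  show "smul \<theta> j v = refl (bet v j) \<circ> v"
    by (rule ext) (simp add: smul_def F_sref[OF u] k refl_def)
qed

end

context RS begin

lemma q_exists:
  assumes j: "j \<in> aff_idx \<Delta>"
  shows "\<exists>q. q \<in> fundA \<Delta> \<theta> \<and> q \<bullet> alph j = cc j \<and>
           (\<forall>\<gamma>\<in>\<Phi>. nonneg_comb \<Delta> \<gamma> \<and> \<gamma> \<noteq> alph j \<longrightarrow> 0 < q \<bullet> \<gamma> \<and> q \<bullet> \<gamma> < 1)"
proof -
  have zp: "\<forall>\<alpha>\<in>\<Delta>. 0 < z0 \<bullet> \<alpha>" "z0 \<bullet> \<theta> < 1" using z0_IA by (auto simp: IA_def)
  show ?thesis
  proof (cases j)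
    case None
    have t0: "\<theta> \<noteq> 0" using nz[OF theta_in] .
    define c where "c = (1 - z0 \<bullet> \<theta>) / (\<theta> \<bullet> \<theta>)"
    have c: "0 < c" using zp(2) t0 by (simp add: c_def)
    define q where "q = z0 + c *\<^sub>R \<theta>"
    have qt: "q \<bullet> \<theta> = 1" using t0 by (simp add: q_def c_def inner_add_left)
    have qa: "0 < q \<bullet> \<alpha>" if a: "\<alpha> \<in> \<Delta>" for \<alpha>
    proof -
      have "0 \<le> \<theta> \<bullet> \<alpha>" using simple_theta_nonneg[OF a] by (simp add: inner_commute)
      then have "0 \<le> c * (\<theta> \<bullet> \<alpha>)" using c by simp
      moreover have "0 < z0 \<bullet> \<alpha>" using zp(1) a by blast
      ultimately show ?thesis by (simp add: q_def inner_add_left)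
    qed
    have qf: "q \<in> fundA \<Delta> \<theta>" using qa qt by (auto simp: fundA_def domC_def less_imp_le)
    have "0 < q \<bullet> \<gamma> \<and> q \<bullet> \<gamma> < 1" if g: "\<gamma> \<in> \<Phi>" "nonneg_comb \<Delta> \<gamma>" "\<gamma> \<noteq> \<theta>" for \<gamma>
    proof -
      have "0 < q \<bullet> \<gamma>" using nc_gt[OF g(2) nz[OF g(1)]] qa by blast
      moreover have "0 < q \<bullet> (\<theta> - \<gamma>)" using nc_gt[OF theta_high[OF g(1)]] qa g(3) by simp
      ultimately show ?thesis using qt by (simp add: inner_diff_right)
    qed
    then show ?thesis using qf qt None by (intro exI[of _ q]) (auto simp: alph_def cc_def)
  next
    case (Some a)
    have a: "a \<in> \<Delta>" using j Some by (auto simp: aff_idx_def)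
    have a0: "a \<noteq> 0" using a Delta_sub nz by auto
    define c where "c = (z0 \<bullet> a) / (a \<bullet> a)"
    have c: "0 < c" using zp(1) a a0 by (simp add: c_def)
    define q where "q = z0 - c *\<^sub>R a"
    have qaa: "q \<bullet> a = 0" using a0 by (simp add: q_def c_def inner_diff_left)
    have qa: "0 < q \<bullet> \<alpha>" if al: "\<alpha> \<in> \<Delta>" "\<alpha> \<noteq> a" for \<alpha>
    proof -
      have "a \<bullet> \<alpha> \<le> 0" using simple_inner_nonpos[OF a al(1) al(2)] .
      then have "c * (a \<bullet> \<alpha>) \<le> 0" using c by (simp add: mult_nonneg_nonpos)
      moreover have "0 < z0 \<bullet> \<alpha>" using zp(1) al by blast
      ultimately show ?thesis by (simp add: q_def inner_diff_left)
    qed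
    have qa': "0 \<le> q \<bullet> \<alpha>" if al: "\<alpha> \<in> \<Delta>" for \<alpha>
    proof (cases "\<alpha> = a")
      case True then show ?thesis using qaa by simp
    next
      case False then show ?thesis using qa[OF al False] by simp
    qed
    have qt: "q \<bullet> \<theta> < 1"
    proof -
      have "0 \<le> c * (a \<bullet> \<theta>)" using simple_theta_nonneg[OF a] c by simp
      then show ?thesis using zp(2) by (simp add: q_def inner_diff_left)
    qed
    have qC: "q \<in> domC \<Delta>" using qa' by (auto simp: domC_def)
    have qf: "q \<in> fundA \<Delta> \<theta>" using qC qt by (auto simp: fundA_def)
    have "0 < q \<bullet> \<gamma> \<and> q \<bullet> \<gamma> < 1" if g: "\<gamma> \<in> \<Phi>" "nonneg_comb \<Delta> \<gamma>" "\<gamma> \<noteq> a" for \<gamma>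
    proof -
      obtain d where d: "\<gamma> = (\<Sum>\<alpha>\<in>\<Delta>. real (d \<alpha>) *\<^sub>R \<alpha>)" using g(2) by (auto simp: nonneg_comb_def)
      obtain a' where a': "a' \<in> \<Delta>" "a' \<noteq> a" "d a' > 0" using only_alpha[OF a g(1) d g(3)] by blast
      have "q \<bullet> \<gamma> = (\<Sum>\<alpha>\<in>\<Delta>. real (d \<alpha>) * (q \<bullet> \<alpha>))" by (subst d) (simp add: inner_sum_right)
      also have "\<dots> > 0"
        using a' qa[OF a'(1,2)] qa' finDelta by (intro sum_pos2[of _ a']) auto
      finally have "0 < q \<bullet> \<gamma>" .
      moreover have "0 \<le> q \<bullet> (\<theta> - \<gamma>)" using nc_ge[OF theta_high[OF g(1)] qC] .
      ultimately show ?thesis using qt by (simp add: inner_diff_right)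
    qed
    then show ?thesis using qf qaa Some by (intro exI[of _ q]) (auto simp: alph_def cc_def)
  qed
qed

lemma q_notint:
  assumes q: "\<forall>\<gamma>\<in>\<Phi>. nonneg_comb \<Delta> \<gamma> \<and> \<gamma> \<noteq> a \<longrightarrow> 0 < q \<bullet> \<gamma> \<and> q \<bullet> \<gamma> < 1"
    and g: "\<gamma> \<in> \<Phi>" "\<gamma> \<noteq> a" "\<gamma> \<noteq> -a"
  shows "q \<bullet> \<gamma> \<notin> \<int>"
proof
  assume "q \<bullet> \<gamma> \<in> \<int>"
  then obtain n :: int where n: "q \<bullet> \<gamma> = of_int n" by (auto elim: Ints_cases)
  show False
  proof (cases "nonneg_comb \<Delta> \<gamma>")
    case True
    then have "0 < q \<bullet> \<gamma> \<and> q \<bullet> \<gamma> < 1" using q g by blast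
    then show False using n by auto
  next
    case False
    then have "nonneg_comb \<Delta> (-\<gamma>)" using pos_or_neg[OF g(1)] by auto
    moreover have "-\<gamma> \<noteq> a" using g(3) by auto
    ultimately have "0 < q \<bullet> (-\<gamma>) \<and> q \<bullet> (-\<gamma>) < 1" using q neg_closed[OF g(1)] by blast
    then show False using n by auto
  qed
qed

lemma u_inner: assumes "good u" shows "u x \<bullet> lin u \<gamma> = x \<bullet> \<gamma> + u 0 \<bullet> lin u \<gamma>"
proof -
  have e: "u x = lin u x + u 0" by (simp add: lin_def)
  have "u x \<bullet> lin u \<gamma> = lin u x \<bullet> lin u \<gamma> + u 0 \<bullet> lin u \<gamma>" unfolding e by (simp add: inner_add_left)
  also have "lin u x \<bullet> lin u \<gamma> = x \<bullet> \<gamma>" using good_lin(1)[OF assms] by (simp add: orthogonal_transformation_def)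
  finally show ?thesis .
qed

lemma G4:
  assumes v: "v \<in> What \<Delta> \<theta>" and j: "j \<in> aff_idx \<Delta>" and k: "kap v j \<noteq> 0"
  shows "alcove \<Delta> \<theta> (smul \<theta> j v) \<subseteq> domC \<Delta>"
proof -
  have u: "good v" using What_good[OF v] .
  have vA: "v \<in> affW \<Delta> \<theta>" using v by (simp add: What_def)
  define u' where "u' = smul \<theta> j v"
  have u': "good u'" unfolding u'_def by (rule affW_good[OF affW_step[OF vA j]])
  obtain q where q: "q \<in> fundA \<Delta> \<theta>" "q \<bullet> alph j = cc j"
    "\<forall>\<gamma>\<in>\<Phi>. nonneg_comb \<Delta> \<gamma> \<and> \<gamma> \<noteq> alph j \<longrightarrow> 0 < q \<bullet> \<gamma> \<and> q \<bullet> \<gamma> < 1"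
    using q_exists[OF j] by blast
  have sq: "sref \<theta> j q = q" using q(2) by (simp add: sref_eq)
  have main: "\<forall>y\<in>fundA \<Delta> \<theta>. 0 \<le> u' y \<bullet> a" if a: "a \<in> \<Delta>" for a
  proof -
    have aP: "a \<in> \<Phi>" using a Delta_sub by auto
    have "\<forall>l. 0 \<le> l \<and> l < 1 \<longrightarrow> 0 < (1 - l) * (v z0 \<bullet> a) + l * (v q \<bullet> a)"
    proof (intro allI impI)
      fix l :: real assume l: "0 \<le> l \<and> l < 1"
      define x where "x = (1 - l) *\<^sub>R z0 + l *\<^sub>R q"
      have xI: "x \<in> IA" using seg_IA[OF z0_IA q(1)] l by (simp add: x_def)
      have "0 \<le> v x \<bullet> a" using What_C[OF v] xI IA_fundA a by (auto simp: domC_def)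
      moreover have "v x \<bullet> a \<noteq> 0" using avoid[OF u xI aP, of 0] by simp
      ultimately have "0 < v x \<bullet> a" by simp
      then show "0 < (1 - l) * (v z0 \<bullet> a) + l * (v q \<bullet> a)"
        by (simp add: x_def good_comb[OF u] inner_add_left)
    qed
    then have ge: "0 \<le> v q \<bullet> a" by (rule lim_lemma)
    have "v q \<bullet> a \<noteq> 0"
    proof -
      obtain \<gamma> where g: "\<gamma> \<in> \<Phi>" "a = lin v \<gamma>" using perm[OF good_lin(1,2)[OF u]] aP by blast
      have l: "linear (lin v)" using good_lin(1)[OF u] orthogonal_transformation_linear by blast
      have vqb: "v q \<bullet> bet v j = kap v j" using F2[OF u, of q j] q(2) by simp
      show ?thesis
      proof (cases "\<gamma> = alph j \<or> \<gamma> = - alph j")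
        case True
        then show ?thesis
        proof
          assume "\<gamma> = alph j" then have "a = bet v j" using g by (simp add: bet_def)
          then show ?thesis using vqb k by simp
        next
          assume "\<gamma> = - alph j" then have "a = - bet v j" using g linear_neg[OF l] by (simp add: bet_def)
          then show ?thesis using vqb k by simp
        qed
      next
        case False
        then have nI: "q \<bullet> \<gamma> \<notin> \<int>" using q_notint[OF q(3) g(1)] by blast
        have "v q \<bullet> a = q \<bullet> \<gamma> + v 0 \<bullet> a" using u_inner[OF u, of q \<gamma>] g(2) by simp
        moreover have "v 0 \<bullet> a \<in> \<int>" using good_lin(4)[OF u] aP by blast
        ultimately show ?thesis
        proof (intro notI)
          assume h: "v q \<bullet> a = q \<bullet> \<gamma> + v 0 \<bullet> a" "v 0 \<bullet> a \<in> \<int>" "v q \<bullet> a = 0"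
          then have "q \<bullet> \<gamma> = - (v 0 \<bullet> a)" by linarith
          then show False using nI h(2) by (metis Ints_minus)
        qed
      qed
    qed
    then have B: "0 < u' q \<bullet> a" using ge sq by (simp add: u'_def smul_def)
    obtain l where l: "0 \<le> l" "l < 1" "0 < (1 - l) * (u' z0 \<bullet> a) + l * (u' q \<bullet> a)"
      using near1[OF B] by blast
    define x1 where "x1 = (1 - l) *\<^sub>R z0 + l *\<^sub>R q"
    have x1: "x1 \<in> IA" using seg_IA[OF z0_IA q(1)] l by (simp add: x1_def)
    have "0 < u' x1 \<bullet> a" using l(3) by (simp add: x1_def good_comb[OF u'] inner_add_left)
    then show ?thesis using pos_on_fundA[OF u' aP x1] by blast
  qed
  show ?thesis
  proof
    fix y assume "y \<in> alcove \<Delta> \<theta> (smul \<theta> j v)"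
    then obtain x where "x \<in> fundA \<Delta> \<theta>" "y = u' x" by (auto simp: alcove_def u'_def)
    then show "y \<in> domC \<Delta>" using main by (auto simp: domC_def)
  qed
qed

end

context RS begin

lemma wd_finW: "set as \<subseteq> \<Delta> \<Longrightarrow> wd as \<in> finW \<Delta> \<theta>"
  using finW_wd by blast

lemma id_What: "id \<in> What \<Delta> \<theta>"
  by (auto simp: What_def alcove_def fundA_def affW.affW_id)

lemma v_z0_pos: assumes v: "v \<in> What \<Delta> \<theta>" shows "\<forall>\<alpha>\<in>\<Delta>. 0 < v z0 \<bullet> \<alpha>"
proof
  fix \<alpha> assume a: "\<alpha> \<in> \<Delta>"
  have "0 \<le> v z0 \<bullet> \<alpha>" using What_C[OF v z0_fundA] a by (auto simp: domC_def)
  moreover have "v z0 \<bullet> \<alpha> \<noteq> 0" using avoid[OF What_good[OF v] z0_IA, of \<alpha> 0] a Delta_sub by auto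
  ultimately show "0 < v z0 \<bullet> \<alpha>" by simp
qed

lemma rep:
  assumes v: "v \<in> What \<Delta> \<theta>" and as: "set as \<subseteq> \<Delta>"
  shows "coset_rep \<Delta> \<theta> (wd as \<circ> v) = v"
  unfolding coset_rep_def
proof (rule the_equality)
  have g: "v = gmul (wd as \<circ> v) (wd (rev as))"
    using wd_rev[OF as] by (simp add: gmul_def comp_assoc[symmetric])
  have f: "wd (rev as) \<in> finW \<Delta> \<theta>" using as by (intro wd_finW) auto
  show "v \<in> What \<Delta> \<theta> \<and> v \<in> coset \<Delta> \<theta> (wd as \<circ> v)"
    unfolding coset_def using v g f by (intro conjI CollectI exI[of _ "wd (rev as)"]) simp_all
next
  fix v' assume h: "v' \<in> What \<Delta> \<theta> \<and> v' \<in> coset \<Delta> \<theta> (wd as \<circ> v)"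
  then obtain w where w: "w \<in> finW \<Delta> \<theta>" "v' = gmul (wd as \<circ> v) w" by (auto simp: coset_def)
  then obtain cs where cs: "set cs \<subseteq> \<Delta>" "w = wd cs" using finW_wd by blast
  have v': "v' = wd (cs @ as) \<circ> v" using w(2) cs(2) by (simp add: gmul_def wd_append comp_assoc)
  have "wd (cs @ as) (v z0) \<in> domC \<Delta>"
    using What_C[OF conjunct1[OF h] z0_fundA] v' by simp
  then have "wd (cs @ as) = id" using W_fix[OF v_z0_pos[OF v]] cs(1) as by simp
  then show "v' = v" using v' by simp
qed

lemma kap_wd: assumes v: "good v" and as: "set as \<subseteq> \<Delta>"
  shows "kap (wd as \<circ> v) j = kap v j"
proof -
  define w where "w = wd as"
  have ow: "orthogonal_transformation w" using orth_wd[OF as] by (simp add: w_def)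
  have lw: "linear w" using ow orthogonal_transformation_linear by blast
  have "lin (w \<circ> v) x = w (lin v x)" for x by (simp add: lin_def linear_diff[OF lw])
  then have "bet (w \<circ> v) j = w (bet v j)" by (simp add: bet_def)
  then show ?thesis using ow by (simp add: kap_def w_def orthogonal_transformation_def)
qed

lemma What_smul: "v \<in> What \<Delta> \<theta> \<Longrightarrow> j \<in> aff_idx \<Delta> \<Longrightarrow> alcove \<Delta> \<theta> (smul \<theta> j v) \<subseteq> domC \<Delta> \<Longrightarrow> smul \<theta> j v \<in> What \<Delta> \<theta>"
  by (auto simp: What_def intro: affW_step)

lemma smul_wd: "smul \<theta> j (wd as \<circ> v) = wd as \<circ> smul \<theta> j v"
  by (simp add: smul_def comp_assoc)

lemma step_inv:
  assumes v: "v \<in> What \<Delta> \<theta>" and as: "set as \<subseteq> \<Delta>" and j: "j \<in> aff_idx \<Delta>"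
  shows "\<exists>v'\<in>What \<Delta> \<theta>. \<exists>as'. set as' \<subseteq> \<Delta> \<and> smul \<theta> j (wd as \<circ> v) = wd as' \<circ> v'"
proof (cases "kap v j = 0")
  case True
  obtain bs where bs: "set bs \<subseteq> \<Delta>" "wd bs = refl (bet v j)"
    using refl_in_W[OF bet_in[OF What_good[OF v] j]] by blast
  have "smul \<theta> j (wd as \<circ> v) = wd (as @ bs) \<circ> v"
    using G3(3)[OF v j True] bs(2) by (simp add: smul_wd wd_append comp_assoc)
  then show ?thesis using v as bs(1) by (intro bexI[of _ v] exI[of _ "as @ bs"]) auto
next
  case False
  have "smul \<theta> j v \<in> What \<Delta> \<theta>" using What_smul[OF v j G4[OF v j False]] .
  then show ?thesis using as by (intro bexI[of _ "smul \<theta> j v"] exI[of _ as]) (auto simp: smul_wd)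
qed

lemma step_eq:
  assumes v: "v \<in> What \<Delta> \<theta>" and as: "set as \<subseteq> \<Delta>" and j: "j \<in> aff_idx \<Delta>"
  defines "u \<equiv> wd as \<circ> v"
  shows "map_pmf (\<lambda>s. (coset_rep \<Delta> \<theta> (fst s), snd s))
      (if \<not> separates (hyp \<theta> u j) (alcove \<Delta> \<theta> u) (fundA \<Delta> \<theta>)
       then map_pmf (\<lambda>b. if b then (smul \<theta> j u, k') else (u, k')) (bernoulli_pmf p)
       else return_pmf (u, k'))
    = (if \<not> separates (hyp \<theta> v j) (alcove \<Delta> \<theta> v) (fundA \<Delta> \<theta>) \<and> alcove \<Delta> \<theta> (smul \<theta> j v) \<subseteq> domC \<Delta>
       then map_pmf (\<lambda>b. if b then (smul \<theta> j v, k') else (v, k')) (bernoulli_pmf p)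
       else return_pmf (v, k'))"
proof -
  have gv: "good v" using What_good[OF v] .
  have gu: "good u" unfolding u_def by (rule good_wd[OF gv as])
  have ku: "kap u j = kap v j" unfolding u_def by (rule kap_wd[OF gv as])
  have ru: "coset_rep \<Delta> \<theta> u = v" unfolding u_def by (rule rep[OF v as])
  show ?thesis
  proof (cases "kap v j = 0")
    case True
    have nsv: "\<not> separates (hyp \<theta> v j) (alcove \<Delta> \<theta> v) (fundA \<Delta> \<theta>)"
      using sep_z[OF gv j True] G3(1)[OF v j True] by simp
    have nC: "\<not> alcove \<Delta> \<theta> (smul \<theta> j v) \<subseteq> domC \<Delta>" using G3(2)[OF v j True] .
    obtain bs where bs: "set bs \<subseteq> \<Delta>" "wd bs = refl (bet v j)"
      using refl_in_W[OF bet_in[OF gv j]] by blast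
    have "smul \<theta> j u = wd (as @ bs) \<circ> v"
      using G3(3)[OF v j True] bs(2) by (simp add: u_def smul_wd wd_append comp_assoc)
    then have rsu: "coset_rep \<Delta> \<theta> (smul \<theta> j u) = v" using rep[OF v] as bs(1) by simp
    have c: "(\<lambda>b. (\<lambda>s. (coset_rep \<Delta> \<theta> (fst s), snd s)) (if b then (smul \<theta> j u, k') else (u, k'))) = (\<lambda>_. (v, k'))"
      using rsu ru by (auto simp: fun_eq_iff)
    show ?thesis using nsv nC ru by (simp add: pmf.map_comp o_def c)
  next
    case False
    have se: "separates (hyp \<theta> u j) (alcove \<Delta> \<theta> u) (fundA \<Delta> \<theta>) \<longleftrightarrow> separates (hyp \<theta> v j) (alcove \<Delta> \<theta> v) (fundA \<Delta> \<theta>)"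
      using sep_nz[OF gu j] sep_nz[OF gv j False] ku False by simp
    have C: "alcove \<Delta> \<theta> (smul \<theta> j v) \<subseteq> domC \<Delta>" using G4[OF v j False] .
    have sv: "smul \<theta> j v \<in> What \<Delta> \<theta>" using What_smul[OF v j C] .
    have rsu: "coset_rep \<Delta> \<theta> (smul \<theta> j u) = smul \<theta> j v"
      using rep[OF sv as] by (simp add: u_def smul_wd)
    have c: "(\<lambda>b. (\<lambda>s. (coset_rep \<Delta> \<theta> (fst s), snd s)) (if b then (smul \<theta> j u, k') else (u, k')))
        = (\<lambda>b. if b then (smul \<theta> j v, k') else (v, k'))"
      using rsu ru by (auto simp: fun_eq_iff)
    show ?thesis using se C ru by (simp add: pmf.map_comp o_def c)
  qed
qed

end

theorem lemma3p1:
  fixes \<Phi> \<Delta> :: "'a::euclidean_space set" and \<theta> z0 \<eta> :: 'a and p :: real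
    and i :: "nat \<Rightarrow> 'a option" and N :: nat and M :: nat
  assumes "root_system \<Phi>" and "irreducible_rs \<Phi>" and "simple_system \<Phi> \<Delta>"
    and "highest_root \<Phi> \<Delta> \<theta>"
    and "z0 \<in> interior (fundA \<Delta> \<theta>)" and "0 < p" and "p < 1"
    and "\<eta> \<in> Upsilon \<Phi> \<Delta> z0"
    and "ray_seq \<Delta> \<theta> z0 \<eta> i"
    and "0 < N" and "\<forall>j. i (j + N) = i j"
  shows "map_pmf fst (chain_dist (step_hat \<Delta> \<theta> N i p) M)
       = map_pmf (\<lambda>s. coset_rep \<Delta> \<theta> (fst s)) (chain_dist (step_tilde \<Delta> \<theta> N i p) M)"
proof -
  interpret RS \<Phi> \<Delta> \<theta> z0 using assms(1,3,4,5) by unfold_locales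
  have idx: "\<And>k. i k \<in> aff_idx \<Delta>" using assms(9) by (simp add: ray_seq_def)
  define f where "f = (\<lambda>s::('a \<Rightarrow> 'a) \<times> nat. (coset_rep \<Delta> \<theta> (fst s), snd s))"
  define Inv where "Inv s \<longleftrightarrow> (\<exists>v\<in>What \<Delta> \<theta>. \<exists>as. set as \<subseteq> \<Delta> \<and> fst s = wd as \<circ> v)" for s :: "('a \<Rightarrow> 'a) \<times> nat"
  define st where "st = step_tilde \<Delta> \<theta> N i p"
  define sh where "sh = step_hat \<Delta> \<theta> N i p"
  have pt: "map_pmf f (st s) = sh (f s) \<and> (\<forall>s'\<in>set_pmf (st s). Inv s')" if s: "Inv s" for s
  proof -
    obtain u k where uk: "s = (u, k)" by (cases s)
    obtain v as where v: "v \<in> What \<Delta> \<theta>" "set as \<subseteq> \<Delta>" "u = wd as \<circ> v" using s uk by (auto simp: Inv_def)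
    have fs: "f s = (v, k)" using rep[OF v(1,2)] v(3) uk by (simp add: f_def)
    have "map_pmf f (st s) = sh (v, k)"
      unfolding uk st_def sh_def step_tilde_def step_hat_def f_def
      using step_eq[OF v(1,2) idx[of k], of "Suc k mod N" p] v(3) by simp
    then have e1: "map_pmf f (st s) = sh (f s)" by (simp add: fs)
    have "\<forall>s'\<in>set_pmf (st s). fst s' = u \<or> fst s' = smul \<theta> (i k) u"
      unfolding uk st_def step_tilde_def by (auto split: if_splits)
    moreover have "Inv s'" if "fst s' = u" for s' using that v by (auto simp: Inv_def)
    moreover have "Inv s'" if "fst s' = smul \<theta> (i k) u" for s'
      using that step_inv[OF v(1,2) idx[of k]] v(3) by (auto simp: Inv_def)
    ultimately show ?thesis using e1 by blast
  qed
  have main: "map_pmf f (chain_dist st M) = chain_dist sh M \<and> (\<forall>s\<in>set_pmf (chain_dist st M). Inv s)"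
  proof (induction M)
    case 0
    have "coset_rep \<Delta> \<theta> id = id" using rep[OF id_What, of "[]"] by simp
    moreover have "Inv (id, 0)" using id_What by (auto simp: Inv_def intro!: exI[of _ "[]"])
    ultimately show ?case by (simp add: chain_dist_def f_def)
  next
    case (Suc M)
    have T: "chain_dist g (Suc M) = bind_pmf (chain_dist g M) g" for g :: "('a \<Rightarrow> 'a) \<times> nat \<Rightarrow> (('a \<Rightarrow> 'a) \<times> nat) pmf"
      by (simp add: chain_dist_def)
    have "map_pmf f (chain_dist st (Suc M)) = bind_pmf (chain_dist st M) (\<lambda>s. map_pmf f (st s))"
      by (simp add: T map_bind_pmf)
    also have "\<dots> = bind_pmf (chain_dist st M) (\<lambda>s. sh (f s))"
      using Suc pt by (intro bind_pmf_cong) auto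
    also have "\<dots> = bind_pmf (map_pmf f (chain_dist st M)) sh" by (simp add: bind_map_pmf)
    also have "\<dots> = chain_dist sh (Suc M)" using Suc by (simp add: T)
    finally have "map_pmf f (chain_dist st (Suc M)) = chain_dist sh (Suc M)" .
    moreover have "\<forall>s\<in>set_pmf (chain_dist st (Suc M)). Inv s"
      using Suc pt by (auto simp: T)
    ultimately show ?case by blast
  qed
  have "map_pmf fst (chain_dist sh M) = map_pmf fst (map_pmf f (chain_dist st M))" using main by simp
  also have "\<dots> = map_pmf (\<lambda>s. coset_rep \<Delta> \<theta> (fst s)) (chain_dist st M)"
    by (simp add: pmf.map_comp o_def f_def)
  finally show ?thesis by (simp add: st_def sh_def)
qed


end
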